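(* Let $n\ge 2$, $k=\lceil n/2\rceil$, and let $\sigma_n=a_1\cdots a_n$ be the top elementary symmetric polynomial in variables $a_1,\dots,a_n$. Then the polynomials $\ell_1,\dots,\ell_{k-1},\sigma_n\in\mathbb{Q}[a_1,\dots,a_n]$ are algebraically independent over $\mathbb{Q}$, where $\ell_i$ are defined by $\prod_{j=1}^n f(a_jt)=\sum_{i\ge0}\ell_i(a_1,\dots,a_n)t^{2i}$ with $f(t)=t/\tanh t$. Consequently the ring homomorphism $\mathbb{Q}[e,x_1,x_2,\dots]\to\mathbb{Q}[a_1,\dots,a_n,x_k,x_{k+1},\dots]$ given by $e\mapsto a_1\cdots a_n$, $x_i\mapsto\ell_i(a_1,\dots,a_n)$ for $i<k$, and $x_i\mapsto x_i$ for $i\ge k$ is injective.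
   Context: Here $e$, $x_1,x_2,\dots$ and $a_1,\dots,a_n$ are independent polynomial variables. *)

theory Defs
  imports Complex_Main "HOL-Library.Poly_Mapping" "HOL-Computational_Algebra.Formal_Power_Series"
begin

text \<open>Multivariate polynomials over the rationals in variables of type 'v:
  finitely supported maps from monomials (exponent vectors 'v =>0 nat) to coefficients.\<close>
type_synonym 'v mpoly = "('v \<Rightarrow>\<^sub>0 nat) \<Rightarrow>\<^sub>0 rat"

definition mvar :: "'v \<Rightarrow> 'v mpoly" where
  "mvar v = Poly_Mapping.single (Poly_Mapping.single v 1) 1"

definition mconst :: "rat \<Rightarrow> 'v mpoly" where
  "mconst c = Poly_Mapping.single 0 c"

definition mvars :: "'v mpoly \<Rightarrow> 'v set" where
  "mvars P = \<Union> (Poly_Mapping.keys ` Poly_Mapping.keys P)"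

definition meval :: "('v \<Rightarrow> 'w mpoly) \<Rightarrow> 'v mpoly \<Rightarrow> 'w mpoly" where
  "meval g P = (\<Sum>m\<in>Poly_Mapping.keys P.
      mconst (Poly_Mapping.lookup P m) * (\<Prod>v\<in>Poly_Mapping.keys m. g v ^ Poly_Mapping.lookup m v))"

definition alg_indep :: "'i set \<Rightarrow> ('i \<Rightarrow> 'w mpoly) \<Rightarrow> bool" where
  "alg_indep I p \<longleftrightarrow> (\<forall>P. mvars P \<subseteq> I \<longrightarrow> meval p P = 0 \<longrightarrow> P = 0)"

text \<open>The power series f(t) = t / tanh t = cosh t / (sinh t / t) over Q.\<close>
definition fps_cosh :: "rat fps" where
  "fps_cosh = fps_const (1/2) * (fps_exp 1 + fps_exp (-1))"

definition fps_sinh :: "rat fps" where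
  "fps_sinh = fps_const (1/2) * (fps_exp 1 - fps_exp (-1))"

definition f_fps :: "rat fps" where
  "f_fps = fps_cosh * inverse (fps_shift 1 fps_sinh)"

text \<open>f(a t) with a a polynomial variable, as a power series in t with polynomial coefficients.\<close>
definition f_subst :: "'v \<Rightarrow> 'v mpoly fps" where
  "f_subst v = Abs_fps (\<lambda>d. Poly_Mapping.single (Poly_Mapping.single v d) (fps_nth f_fps d))"

definition ell :: "(nat \<Rightarrow> 'v) \<Rightarrow> nat \<Rightarrow> nat \<Rightarrow> 'v mpoly" where
  "ell av n i = fps_nth (\<Prod>j\<in>{1..n}. f_subst (av j)) (2 * i)"

definition sigma_top :: "(nat \<Rightarrow> 'v) \<Rightarrow> nat \<Rightarrow> 'v mpoly" where
  "sigma_top av n = (\<Prod>j\<in>{1..n}. mvar (av j))"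

text \<open>Variables of Q[e, x_1, x_2, ...] and of Q[a_1..a_n, x_k, x_{k+1}, ...].\<close>
datatype svar = E | X nat
datatype tvar = A nat | Y nat

end

theory Submission
  imports Defs
begin

unbundle fps_syntax


lemma lookup_mconst_mult: "Poly_Mapping.lookup (mconst c * p) k = c * Poly_Mapping.lookup p k"
  by (simp add: mconst_def mult_map_scale_conv_mult[symmetric] map.rep_eq when_def)

lemma mconst_add: "mconst (a+b) = mconst a + mconst b" by (simp add: mconst_def single_add)
lemma mconst_diff: "mconst (a-b) = mconst a - mconst b" by (simp add: mconst_def single_diff)
lemma mconst_mult: "mconst (a*b) = mconst a * mconst b" by (simp add: mconst_def mult_single)
lemma mconst_0[simp]: "mconst 0 = 0" by (simp add: mconst_def)
lemma mconst_1[simp]: "mconst 1 = 1" by (simp add: mconst_def)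
lemma mconst_of_nat: "mconst (of_nat n) = of_nat n" by (simp add: mconst_def)

definition mon :: "('v \<Rightarrow> 'w mpoly) \<Rightarrow> ('v \<Rightarrow>\<^sub>0 nat) \<Rightarrow> 'w mpoly" where
  "mon g m = (\<Prod>v\<in>Poly_Mapping.keys m. g v ^ Poly_Mapping.lookup m v)"

lemma mon_superset:
  assumes "finite S" "Poly_Mapping.keys m \<subseteq> S"
  shows "mon g m = (\<Prod>v\<in>S. g v ^ Poly_Mapping.lookup m v)"
  unfolding mon_def
  by (rule prod.mono_neutral_left) (use assms in \<open>auto simp: in_keys_iff\<close>)

lemma keys_add_nat: "Poly_Mapping.keys (a + b :: 'v \<Rightarrow>\<^sub>0 nat) = Poly_Mapping.keys a \<union> Poly_Mapping.keys b"
  by (auto simp: in_keys_iff lookup_add)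

lemma mon_add: "mon g (a + b) = mon g a * mon g b"
proof -
  let ?S = "Poly_Mapping.keys a \<union> Poly_Mapping.keys b"
  have fin: "finite ?S" by simp
  have "mon g (a+b) = (\<Prod>v\<in>?S. g v ^ Poly_Mapping.lookup (a+b) v)"
    by (rule mon_superset[OF fin]) (simp add: keys_add_nat)
  also have "\<dots> = (\<Prod>v\<in>?S. g v ^ Poly_Mapping.lookup a v) * (\<Prod>v\<in>?S. g v ^ Poly_Mapping.lookup b v)"
    by (simp add: lookup_add power_add prod.distrib)
  also have "\<dots> = mon g a * mon g b"
    by (simp add: mon_superset[OF fin])
  finally show ?thesis .
qed

lemma mon_0[simp]: "mon g 0 = 1" by (simp add: mon_def)

lemma mon_single1[simp]: "mon g (Poly_Mapping.single v 1) = g v"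
  unfolding mon_def by simp

lemma meval_alt: "meval g P = (\<Sum>m\<in>Poly_Mapping.keys P. mconst (Poly_Mapping.lookup P m) * mon g m)"
  by (simp add: meval_def mon_def)

lemma meval_superset:
  assumes "finite S" "Poly_Mapping.keys P \<subseteq> S"
  shows "meval g P = (\<Sum>m\<in>S. mconst (Poly_Mapping.lookup P m) * mon g m)"
  unfolding meval_alt
  by (rule sum.mono_neutral_left) (use assms in \<open>auto simp: in_keys_iff\<close>)

lemma meval_0[simp]: "meval g 0 = 0" by (simp add: meval_def)

lemma meval_add: "meval g (P + Q) = meval g P + meval g Q"
proof -
  let ?S = "Poly_Mapping.keys P \<union> Poly_Mapping.keys Q"
  have fin: "finite ?S" by simp
  have "meval g (P+Q) = (\<Sum>m\<in>?S. mconst (Poly_Mapping.lookup (P+Q) m) * mon g m)"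
    by (rule meval_superset[OF fin]) (use keys_add[of P Q] in blast)
  also have "\<dots> = meval g P + meval g Q"
    by (simp add: meval_superset[OF fin] lookup_add mconst_add distrib_right sum.distrib)
  finally show ?thesis .
qed

lemma meval_single: "meval g (Poly_Mapping.single m c) = mconst c * mon g m"
  by (cases "c = 0") (simp_all add: meval_alt)

lemma poly_expand: "P = (\<Sum>m\<in>Poly_Mapping.keys P. Poly_Mapping.single m (Poly_Mapping.lookup P m))"
  by (rule poly_mapping_eqI) (simp add: lookup_sum lookup_single when_def in_keys_iff)

lemma meval_sum: "meval g (sum f B) = (\<Sum>a\<in>B. meval g (f a))"
  by (induction B rule: infinite_finite_induct) (simp_all add: meval_add)

lemma meval_mult: "meval g (P * Q) = meval g P * meval g Q"
proof -
  have "P * Q = (\<Sum>a\<in>Poly_Mapping.keys P. \<Sum>b\<in>Poly_Mapping.keys Q.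
      Poly_Mapping.single (a+b) (Poly_Mapping.lookup P a * Poly_Mapping.lookup Q b))"
    by (subst poly_expand[of P], subst poly_expand[of Q])
       (simp add: sum_product mult_single)
  then have "meval g (P*Q) = (\<Sum>a\<in>Poly_Mapping.keys P. \<Sum>b\<in>Poly_Mapping.keys Q.
      mconst (Poly_Mapping.lookup P a) * mon g a * (mconst (Poly_Mapping.lookup Q b) * mon g b))"
    by (simp add: meval_sum meval_single mon_add mconst_mult mult_ac)
  also have "\<dots> = meval g P * meval g Q"
    by (simp only: meval_alt sum_product)
  finally show ?thesis .
qed

lemma meval_mvar[simp]: "meval g (mvar v) = g v"
  unfolding mvar_def meval_single mon_def by simp

lemma meval_mconst[simp]: "meval g (mconst c) = mconst c"
  by (simp add: mconst_def meval_single)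

lemma meval_1[simp]: "meval g 1 = 1"
  using meval_mconst[of g 1] by simp

lemma meval_uminus: "meval g (- P) = - meval g P"
  using meval_add[of g P "-P"] by (simp add: eq_neg_iff_add_eq_0 add.commute)

lemma meval_diff: "meval g (P - Q) = meval g P - meval g Q"
  using meval_add[of g P "-Q"] by (simp add: meval_uminus)

lemma meval_power: "meval g (P ^ k) = meval g P ^ k"
  by (induction k) (simp_all add: meval_mult)

lemma meval_prod: "meval g (prod f B) = (\<Prod>a\<in>B. meval g (f a))"
  by (induction B rule: infinite_finite_induct) (simp_all add: meval_mult)

lemma meval_compose: "meval g (meval h P) = meval (\<lambda>v. meval g (h v)) P"
  by (simp only: meval_def[of h P] meval_def[of "\<lambda>v. meval g (h v)" P] meval_sum meval_mult
      meval_prod meval_power meval_mconst)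

lemma meval_cong:
  assumes "mvars P \<subseteq> V" "\<And>v. v \<in> V \<Longrightarrow> g v = g' v"
  shows "meval g P = meval g' P"
  unfolding meval_def
proof (rule sum.cong[OF refl])
  fix m assume m: "m \<in> Poly_Mapping.keys P"
  have "Poly_Mapping.keys m \<subseteq> V" using assms(1) m by (auto simp: mvars_def)
  then show "mconst (Poly_Mapping.lookup P m) * (\<Prod>v\<in>Poly_Mapping.keys m. g v ^ Poly_Mapping.lookup m v) =
    mconst (Poly_Mapping.lookup P m) * (\<Prod>v\<in>Poly_Mapping.keys m. g' v ^ Poly_Mapping.lookup m v)"
    using assms(2) by (intro arg_cong2[where f="(*)"] refl prod.cong) auto
qed

lemma mvars_add: "mvars (P + Q) \<subseteq> mvars P \<union> mvars Q"
  unfolding mvars_def using keys_add[of P Q] by blast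

lemma mvars_uminus[simp]: "mvars (- P) = mvars P"
  unfolding mvars_def by (simp add: keys_minus)

lemma mvars_diff: "mvars (P - Q) \<subseteq> mvars P \<union> mvars Q"
  using mvars_add[of P "-Q"] by simp


lemma mvars_mult: "mvars (P * Q) \<subseteq> mvars P \<union> mvars Q"
proof
  fix v assume "v \<in> mvars (P * Q)"
  then obtain m where m: "m \<in> Poly_Mapping.keys (P*Q)" "v \<in> Poly_Mapping.keys m" by (auto simp: mvars_def)
  then obtain a b where "a \<in> Poly_Mapping.keys P" "b \<in> Poly_Mapping.keys Q" "m = a + b"
    using keys_mult[of P Q] by blast
  then show "v \<in> mvars P \<union> mvars Q" using m(2) by (auto simp: mvars_def keys_add_nat)
qed

lemma mvars_mconst[simp]: "mvars (mconst c) = {}"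
  by (simp add: mvars_def mconst_def)

lemma mvars_mvar[simp]: "mvars (mvar v) = {v}"
  by (simp add: mvars_def mvar_def)

lemma mvars_0[simp]: "mvars 0 = {}" by (simp add: mvars_def)
lemma mvars_1[simp]: "mvars 1 = {}" using mvars_mconst[of 1] by simp

lemma mvars_sum: "mvars (sum f B) \<subseteq> (\<Union>a\<in>B. mvars (f a))"
proof (induction B rule: infinite_finite_induct)
  case (insert x F)
  then show ?case using mvars_add[of "f x" "sum f F"] by auto
qed auto

lemma mvars_prod: "mvars (prod f B) \<subseteq> (\<Union>a\<in>B. mvars (f a))"
proof (induction B rule: infinite_finite_induct)
  case (insert x F)
  then show ?case using mvars_mult[of "f x" "prod f F"] by auto
qed auto

lemma mvars_power: "mvars (P ^ k) \<subseteq> mvars P"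
proof (induction k)
  case (Suc k)
  then show ?case using mvars_mult[of P "P^k"] by auto
qed auto

lemma mvars_meval: "mvars (meval h P) \<subseteq> (\<Union>v\<in>mvars P. mvars (h v))"
proof -
  have "mvars (meval h P) \<subseteq> (\<Union>m\<in>Poly_Mapping.keys P. mvars (mconst (Poly_Mapping.lookup P m) *
      (\<Prod>v\<in>Poly_Mapping.keys m. h v ^ Poly_Mapping.lookup m v)))"
    unfolding meval_def by (rule mvars_sum)
  also have "\<dots> \<subseteq> (\<Union>v\<in>mvars P. mvars (h v))"
  proof (rule UN_least)
    fix m assume m: "m \<in> Poly_Mapping.keys P"
    have "mvars (mconst (Poly_Mapping.lookup P m) * (\<Prod>v\<in>Poly_Mapping.keys m. h v ^ Poly_Mapping.lookup m v))
       \<subseteq> (\<Union>v\<in>Poly_Mapping.keys m. mvars (h v ^ Poly_Mapping.lookup m v))"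
      by (rule order.trans[OF _ mvars_prod])
        (use mvars_mult[of "mconst (Poly_Mapping.lookup P m)" "\<Prod>v\<in>Poly_Mapping.keys m. h v ^ Poly_Mapping.lookup m v"] in simp)
    also have "\<dots> \<subseteq> (\<Union>v\<in>mvars P. mvars (h v))"
    proof (rule UN_least)
      fix v assume "v \<in> Poly_Mapping.keys m"
      then have "v \<in> mvars P" using m by (auto simp: mvars_def)
      then show "mvars (h v ^ Poly_Mapping.lookup m v) \<subseteq> (\<Union>v\<in>mvars P. mvars (h v))"
        using mvars_power[of "h v"] by blast
    qed
    finally show "mvars (mconst (Poly_Mapping.lookup P m) * (\<Prod>v\<in>Poly_Mapping.keys m. h v ^ Poly_Mapping.lookup m v))
       \<subseteq> (\<Union>v\<in>mvars P. mvars (h v))" .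
  qed
  finally show ?thesis .
qed


definition lm :: "'v::linorder mpoly \<Rightarrow> ('v \<Rightarrow>\<^sub>0 nat)" where
  "lm P = Max (Poly_Mapping.keys P)"

definition lc :: "'v::linorder mpoly \<Rightarrow> rat" where
  "lc P = Poly_Mapping.lookup P (lm P)"

lemma lm_in: "P \<noteq> 0 \<Longrightarrow> lm P \<in> Poly_Mapping.keys P"
  unfolding lm_def by (rule Max_in) auto

lemma lm_max: "m \<in> Poly_Mapping.keys P \<Longrightarrow> m \<le> lm P"
  unfolding lm_def by (rule Max_ge) auto

lemma lc_nz: "P \<noteq> 0 \<Longrightarrow> lc P \<noteq> 0"
  using lm_in[of P] by (simp add: lc_def in_keys_iff)

lemma lookup_gt_lm: assumes "lm P < m" shows "Poly_Mapping.lookup P m = 0"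
proof (rule ccontr)
  assume "Poly_Mapping.lookup P m \<noteq> 0"
  then have "m \<le> lm P" by (intro lm_max) (simp add: in_keys_iff)
  with assms show False by simp
qed

lemma sum_single_nz:
  assumes "finite B" "a \<in> B" "\<And>x. x \<in> B \<Longrightarrow> x \<noteq> a \<Longrightarrow> g x = 0"
  shows "sum g B = g a"
proof -
  have "sum g (B - {a}) = 0" by (rule sum.neutral) (use assms(3) in auto)
  then show ?thesis using sum.remove[OF assms(1,2), of g] by simp
qed

lemma lm_mult:
  fixes P Q :: "'v::linorder mpoly"
  assumes P: "P \<noteq> 0" and Q: "Q \<noteq> 0"
  shows "lm (P*Q) = lm P + lm Q \<and> lc (P*Q) = lc P * lc Q"
proof -
  let ?s = "lm P + lm Q"
  have PQ: "P * Q = (\<Sum>a\<in>Poly_Mapping.keys P. \<Sum>b\<in>Poly_Mapping.keys Q.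
      Poly_Mapping.single (a+b) (Poly_Mapping.lookup P a * Poly_Mapping.lookup Q b))"
    by (subst poly_expand[of P], subst poly_expand[of Q]) (simp add: sum_product mult_single)
  have iff: "a + b = ?s \<longleftrightarrow> a = lm P \<and> b = lm Q"
    if a: "a \<in> Poly_Mapping.keys P" and b: "b \<in> Poly_Mapping.keys Q" for a b
  proof
    assume eq: "a + b = ?s"
    have a1: "a \<le> lm P" using lm_max[OF a] .
    have b1: "b \<le> lm Q" using lm_max[OF b] .
    have "a = lm P"
    proof (rule ccontr)
      assume "a \<noteq> lm P"
      then have "a < lm P" using a1 by simp
      then have "a + b < lm P + b" by (rule add_strict_right_mono)
      also have "\<dots> \<le> ?s" using b1 by (rule add_left_mono)
      finally show False using eq by simp
    qed
    then show "a = lm P \<and> b = lm Q" using eq by simp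
  qed simp
  have "Poly_Mapping.lookup (P*Q) ?s = (\<Sum>a\<in>Poly_Mapping.keys P. \<Sum>b\<in>Poly_Mapping.keys Q.
      (if a + b = ?s then Poly_Mapping.lookup P a * Poly_Mapping.lookup Q b else 0))"
    by (subst PQ) (simp add: lookup_sum lookup_single when_def)
  also have "\<dots> = lc P * lc Q"
  proof -
    have "(\<Sum>b\<in>Poly_Mapping.keys Q.
      (if a + b = ?s then Poly_Mapping.lookup P a * Poly_Mapping.lookup Q b else 0)) = 0"
      if "a \<in> Poly_Mapping.keys P" "a \<noteq> lm P" for a
      by (rule sum.neutral) (use iff that in auto)
    moreover have "(\<Sum>b\<in>Poly_Mapping.keys Q.
      (if lm P + b = ?s then Poly_Mapping.lookup P (lm P) * Poly_Mapping.lookup Q b else 0)) = lc P * lc Q"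
      by (subst sum_single_nz[where a="lm Q"]) (use lm_in[OF P] lm_in[OF Q] iff in \<open>auto simp: lc_def\<close>)
    ultimately show ?thesis
      by (subst sum_single_nz[where a="lm P"]) (use lm_in[OF P] in auto)
  qed
  finally have key: "Poly_Mapping.lookup (P*Q) ?s = lc P * lc Q" .
  then have inK: "?s \<in> Poly_Mapping.keys (P*Q)"
    using lc_nz[OF P] lc_nz[OF Q] by (simp add: in_keys_iff)
  have le: "m \<le> ?s" if mk: "m \<in> Poly_Mapping.keys (P*Q)" for m
  proof -
    obtain a b where ab: "a \<in> Poly_Mapping.keys P" "b \<in> Poly_Mapping.keys Q" "m = a + b"
      using keys_mult[of P Q] mk by blast
    show ?thesis unfolding ab(3) by (rule add_mono[OF lm_max[OF ab(1)] lm_max[OF ab(2)]])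
  qed
  have "lm (P*Q) = ?s"
  proof (rule antisym)
    have "P * Q \<noteq> 0" using inK by auto
    then show "lm (P*Q) \<le> ?s" using le lm_in by blast
    show "?s \<le> lm (P*Q)" using lm_max[OF inK] .
  qed
  then show ?thesis using key by (simp add: lc_def)
qed

lemma lm_power:
  fixes P :: "'v::linorder mpoly"
  assumes "P \<noteq> 0"
  shows "P ^ k \<noteq> 0 \<and> lm (P ^ k) = (\<Sum>j<k. lm P)"
proof (induction k)
  case 0
  have "lm (1::'v mpoly) = 0" unfolding lm_def by simp
  then show ?case by simp
next
  case (Suc k)
  then have "P * P ^ k \<noteq> 0" using assms by simp
  moreover have "lm (P * P ^ k) = lm P + lm (P^k)" using lm_mult[OF assms] Suc by blast
  ultimately show ?case using Suc by (simp add: add.commute)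
qed

lemma lm_prod:
  fixes h :: "'i \<Rightarrow> 'v::linorder mpoly"
  assumes "finite B" "\<And>i. i \<in> B \<Longrightarrow> h i \<noteq> 0"
  shows "prod h B \<noteq> 0 \<and> lm (prod h B) = (\<Sum>i\<in>B. lm (h i))"
  using assms
proof (induction B rule: finite_induct)
  case empty
  have "lm (1::'v mpoly) = 0" unfolding lm_def by simp
  then show ?case by simp
next
  case (insert x F)
  then have nz: "h x \<noteq> 0" "prod h F \<noteq> 0" by auto
  then have "lm (h x * prod h F) = lm (h x) + lm (prod h F)" using lm_mult by blast
  then show ?case using insert nz by simp
qed

lemma lm_mon:
  fixes h :: "'i \<Rightarrow> 'v::linorder mpoly"
  assumes "\<And>i. i \<in> Poly_Mapping.keys \<alpha> \<Longrightarrow> h i \<noteq> 0"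
  shows "mon h \<alpha> \<noteq> 0 \<and> Poly_Mapping.lookup (lm (mon h \<alpha>)) v =
     (\<Sum>i\<in>Poly_Mapping.keys \<alpha>. Poly_Mapping.lookup \<alpha> i * Poly_Mapping.lookup (lm (h i)) v)"
proof -
  have nz: "h i ^ Poly_Mapping.lookup \<alpha> i \<noteq> 0" if "i \<in> Poly_Mapping.keys \<alpha>" for i
    using assms[OF that] by simp
  have "mon h \<alpha> \<noteq> 0 \<and> lm (mon h \<alpha>) = (\<Sum>i\<in>Poly_Mapping.keys \<alpha>. lm (h i ^ Poly_Mapping.lookup \<alpha> i))"
    unfolding mon_def by (rule lm_prod) (use nz in auto)
  moreover have "lm (h i ^ Poly_Mapping.lookup \<alpha> i) = (\<Sum>j<Poly_Mapping.lookup \<alpha> i. lm (h i))"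
    if "i \<in> Poly_Mapping.keys \<alpha>" for i
    using lm_power[OF assms[OF that]] by blast
  ultimately show ?thesis
    by (simp add: lookup_sum)
qed

lemma alg_indep_lm:
  fixes h :: "'i \<Rightarrow> 'v::linorder mpoly"
  assumes nz: "\<And>i. i \<in> I \<Longrightarrow> h i \<noteq> 0"
  and inj: "\<And>\<alpha> \<beta>. Poly_Mapping.keys \<alpha> \<subseteq> I \<Longrightarrow> Poly_Mapping.keys \<beta> \<subseteq> I \<Longrightarrow>
     (\<And>v. (\<Sum>i\<in>Poly_Mapping.keys \<alpha>. Poly_Mapping.lookup \<alpha> i * Poly_Mapping.lookup (lm (h i)) v) =
           (\<Sum>i\<in>Poly_Mapping.keys \<beta>. Poly_Mapping.lookup \<beta> i * Poly_Mapping.lookup (lm (h i)) v)) \<Longrightarrow> \<alpha> = \<beta>"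
  shows "alg_indep I h"
  unfolding alg_indep_def
proof (intro allI impI)
  fix P :: "'i mpoly"
  assume vars: "mvars P \<subseteq> I" and ev: "meval h P = 0"
  show "P = 0"
  proof (rule ccontr)
    assume P0: "P \<noteq> 0"
    let ?M = "Poly_Mapping.keys P"
    define L where "L m = lm (mon h m)" for m
    have kI: "Poly_Mapping.keys m \<subseteq> I" if "m \<in> ?M" for m
      using vars that by (auto simp: mvars_def)
    have hnz: "h i \<noteq> 0" if "m \<in> ?M" "i \<in> Poly_Mapping.keys m" for m i
      using nz kI[OF that(1)] that(2) by blast
    have monnz: "mon h m \<noteq> 0" if "m \<in> ?M" for m
      using lm_mon[of m h] hnz[OF that] by blast
    have Linj: "m = m'" if "m \<in> ?M" "m' \<in> ?M" "L m = L m'" for m m'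
    proof (rule inj[OF kI[OF that(1)] kI[OF that(2)]])
      fix v
      have "Poly_Mapping.lookup (L m) v = Poly_Mapping.lookup (L m') v" using that(3) by simp
      then show "(\<Sum>i\<in>Poly_Mapping.keys m. Poly_Mapping.lookup m i * Poly_Mapping.lookup (lm (h i)) v) =
           (\<Sum>i\<in>Poly_Mapping.keys m'. Poly_Mapping.lookup m' i * Poly_Mapping.lookup (lm (h i)) v)"
        unfolding L_def using lm_mon[of m h v] lm_mon[of m' h v] hnz[OF that(1)] hnz[OF that(2)] by simp
    qed
    have fin: "finite (L ` ?M)" by simp
    have ne: "L ` ?M \<noteq> {}" using P0 by simp
    obtain m0 where m0: "m0 \<in> ?M" "L m0 = Max (L ` ?M)"
      using Max_in[OF fin ne] by auto
    have lt: "L m < L m0" if "m \<in> ?M" "m \<noteq> m0" for m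
    proof -
      have "L m \<le> L m0" using m0(2) Max_ge[OF fin] that(1) by simp
      moreover have "L m \<noteq> L m0" using Linj[OF that(1) m0(1)] that(2) by blast
      ultimately show ?thesis by simp
    qed
    have "Poly_Mapping.lookup (meval h P) (L m0) =
        (\<Sum>m\<in>?M. Poly_Mapping.lookup P m * Poly_Mapping.lookup (mon h m) (L m0))"
      by (simp add: meval_alt lookup_sum lookup_mconst_mult)
    also have "\<dots> = Poly_Mapping.lookup P m0 * Poly_Mapping.lookup (mon h m0) (L m0)"
    proof (rule sum_single_nz)
      show "Poly_Mapping.lookup P m * Poly_Mapping.lookup (mon h m) (L m0) = 0"
        if "m \<in> ?M" "m \<noteq> m0" for m
        using lookup_gt_lm[of "mon h m" "L m0"] lt[OF that] by (simp add: L_def)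
    qed (use m0 in simp_all)
    also have "\<dots> \<noteq> 0"
      using m0(1) lc_nz[OF monnz[OF m0(1)]] by (simp add: L_def lc_def in_keys_iff)
    finally show False using ev by simp
  qed
qed


section \<open>Euler operator and scaling on power series\<close>

definition Dt :: "'a::comm_semiring_1 fps \<Rightarrow> 'a fps" where
  "Dt F = Abs_fps (\<lambda>n. of_nat n * F $ n)"

lemma Dt_nth[simp]: "Dt F $ n = of_nat n * F $ n"
  by (simp add: Dt_def)

lemma Dt_add: "Dt (F + G) = Dt F + Dt G"
  by (rule fps_ext) (simp add: distrib_left)

lemma Dt_diff: "Dt (F - G :: 'a::comm_ring_1 fps) = Dt F - Dt G"
  by (rule fps_ext) (simp add: right_diff_distrib)

lemma Dt_mult: "Dt (F * G) = Dt F * G + F * Dt G"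
proof (rule fps_ext)
  fix n
  have "Dt (F * G) $ n = (\<Sum>i=0..n. of_nat n * (F $ i * G $ (n - i)))"
    by (simp add: fps_mult_nth sum_distrib_left)
  also have "\<dots> = (\<Sum>i=0..n. of_nat i * F $ i * G $ (n - i) + F $ i * (of_nat (n - i) * G $ (n - i)))"
  proof (rule sum.cong[OF refl])
    fix i assume "i \<in> {0..n}"
    then have "of_nat n = (of_nat i + of_nat (n - i) :: 'a)" by (simp flip: of_nat_add)
    then show "of_nat n * (F $ i * G $ (n - i)) = of_nat i * F $ i * G $ (n - i) + F $ i * (of_nat (n - i) * G $ (n - i))"
      by (simp add: algebra_simps)
  qed
  also have "\<dots> = (Dt F * G + F * Dt G) $ n"
    by (simp add: fps_mult_nth sum.distrib)
  finally show "Dt (F * G) $ n = (Dt F * G + F * Dt G) $ n" .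
qed

lemma Dt_const[simp]: "Dt (fps_const c) = 0"
  by (rule fps_ext) simp

lemma Dt_one[simp]: "Dt 1 = 0"
  by (rule fps_ext) simp

lemma Dt_X[simp]: "Dt fps_X = fps_X"
  by (rule fps_ext) simp

definition sc :: "'a::comm_semiring_1 \<Rightarrow> 'a fps \<Rightarrow> 'a fps" where
  "sc q F = Abs_fps (\<lambda>n. q ^ n * F $ n)"

lemma sc_nth[simp]: "sc q F $ n = q ^ n * F $ n"
  by (simp add: sc_def)

lemma sc_add: "sc q (F + G) = sc q F + sc q G"
  by (rule fps_ext) (simp add: distrib_left)

lemma sc_diff: "sc q (F - G :: 'a::comm_ring_1 fps) = sc q F - sc q G"
  by (rule fps_ext) (simp add: right_diff_distrib)

lemma sc_mult: "sc q (F * G) = sc q F * sc q G"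
proof (rule fps_ext)
  fix n
  have "sc q (F * G) $ n = (\<Sum>i=0..n. q ^ n * (F $ i * G $ (n - i)))"
    by (simp add: fps_mult_nth sum_distrib_left)
  also have "\<dots> = (\<Sum>i=0..n. (q ^ i * F $ i) * (q ^ (n - i) * G $ (n - i)))"
  proof (rule sum.cong[OF refl])
    fix i assume "i \<in> {0..n}"
    then have "q ^ n = q ^ i * q ^ (n - i)" by (simp flip: power_add)
    then show "q ^ n * (F $ i * G $ (n - i)) = (q ^ i * F $ i) * (q ^ (n - i) * G $ (n - i))"
      by (simp add: algebra_simps)
  qed
  also have "\<dots> = (sc q F * sc q G) $ n"
    by (simp add: fps_mult_nth)
  finally show "sc q (F * G) $ n = (sc q F * sc q G) $ n" .
qed

lemma sc_const[simp]: "sc q (fps_const c) = fps_const c"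
  by (rule fps_ext) simp

lemma sc_X: "sc q fps_X = fps_const q * fps_X"
proof (rule fps_ext)
  fix n show "sc q fps_X $ n = (fps_const q * fps_X) $ n" by (cases "n = 1") (simp_all add: fps_X_nth)
qed

lemma sc_exp: "sc q (fps_exp c) = fps_exp (q * c :: 'a::field_char_0)"
  by (rule fps_ext) (simp add: power_mult_distrib)

lemma Dt_exp: "Dt (fps_exp c) = fps_const c * fps_X * fps_exp (c :: 'a::field_char_0)"
proof (rule fps_ext)
  fix n
  show "Dt (fps_exp c) $ n = (fps_const c * fps_X * fps_exp c) $ n"
  proof (cases n)
    case (Suc m)
    have nz: "(of_nat (Suc m) :: 'a) \<noteq> 0" by (rule of_nat_neq_0)
    have "of_nat (Suc m) * (c ^ Suc m / fact (Suc m)) = of_nat (Suc m) * (c ^ Suc m) / (of_nat (Suc m) * (fact m :: 'a))"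
      by (simp only: fact_Suc times_divide_eq_right)
    also have "\<dots> = c ^ Suc m / fact m"
      by (rule nonzero_mult_divide_mult_cancel_left[OF nz])
    also have "\<dots> = c * (c ^ m / fact m)" by simp
    finally have "of_nat (Suc m) * (c ^ Suc m / fact (Suc m)) = c * (c ^ m / (fact m :: 'a))" .
    moreover have "Dt (fps_exp c) $ Suc m = of_nat (Suc m) * (c ^ Suc m / fact (Suc m))"
      by (simp only: Dt_nth fps_exp_nth of_nat_fact)
    moreover have "(fps_const c * fps_X * fps_exp c) $ Suc m = c * (c ^ m / fact m)"
      by (subst mult.assoc, subst fps_mult_left_const_nth, subst fps_X_mult_nth)
        (simp only: nat.simps if_False diff_Suc_1 fps_exp_nth of_nat_fact)
    ultimately show ?thesis using Suc by simp
  qed simp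
qed

section \<open>The series f\<close>

abbreviation "EE \<equiv> fps_exp (1::rat)"
abbreviation "EE' \<equiv> fps_exp (-1::rat)"
abbreviation "CC \<equiv> fps_cosh"
abbreviation "SS \<equiv> fps_sinh"
definition ss :: "rat fps" where "ss = fps_shift 1 fps_sinh"

lemma exp0: "fps_exp (0::rat) = 1"
  by (rule fps_ext) simp

lemma EE_inv: "EE * EE' = 1"
proof -
  have "EE * EE' = fps_exp (1 + (-1::rat))" by (rule fps_exp_add_mult[symmetric])
  also have "\<dots> = 1" by (simp add: exp0)
  finally show ?thesis .
qed

lemma h2: "fps_const (1/2::rat) * 2 = 1"
  by (rule fps_ext) (simp add: fps_numeral_nth)

lemma fc2: "fps_const (2::rat) = 2"
  by (rule fps_ext) (simp add: fps_numeral_nth)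

lemma two_nz: "(2::rat fps) \<noteq> 0"
proof
  assume "(2::rat fps) = 0"
  then have "(2::rat fps) $ 0 = 0" by simp
  then show False by (simp add: fps_numeral_nth)
qed

lemma CS1: "CC * CC - SS * SS = 1"
proof -
  have "CC * CC - SS * SS = EE * EE'"
    using h2 unfolding fps_cosh_def fps_sinh_def by algebra
  then show ?thesis using EE_inv by simp
qed

lemma fps_const_neg1: "fps_const (-1::rat) = - 1"
  by (rule fps_ext) simp

lemma Dt_CC: "Dt CC = fps_X * SS"
  by (simp add: fps_cosh_def fps_sinh_def Dt_mult Dt_add Dt_exp algebra_simps fps_const_neg1 del: fps_const_neg)

lemma Dt_SS: "Dt SS = fps_X * CC"
  by (simp add: fps_cosh_def fps_sinh_def Dt_mult Dt_diff Dt_exp algebra_simps fps_const_neg1 del: fps_const_neg)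

lemma e2: "sc 2 EE = EE * EE" "sc 2 EE' = EE' * EE'"
  by (simp_all add: sc_exp flip: fps_exp_add_mult)

lemma sc_CC: "sc 2 CC = CC * CC + SS * SS"
proof -
  have "sc 2 CC = fps_const (1/2) * (EE * EE + EE' * EE')"
    by (simp only: fps_cosh_def sc_mult sc_add e2 sc_const)
  then show ?thesis
    using h2 unfolding fps_cosh_def fps_sinh_def by algebra
qed

lemma sc_SS: "sc 2 SS = 2 * SS * CC"
proof -
  have "sc 2 SS = fps_const (1/2) * (EE * EE - EE' * EE')"
    by (simp only: fps_sinh_def sc_mult sc_diff e2 sc_const)
  then show ?thesis
    using h2 unfolding fps_cosh_def fps_sinh_def by algebra
qed

lemma SS_nth: "SS $ n = (1/2) * (1 / fact n - (-1)^n / fact n)"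
  unfolding fps_sinh_def by (simp only: fps_mult_left_const_nth fps_sub_nth fps_exp_nth power_one of_nat_fact)

lemma SS_0: "SS $ 0 = 0"
  unfolding SS_nth by simp

lemma CC_0: "CC $ 0 = 1"
  by (simp add: fps_cosh_def)

lemma ss_0: "ss $ 0 = 1"
  unfolding ss_def fps_shift_nth SS_nth by simp

lemma SS_ss: "SS = fps_X * ss"
  by (rule fps_ext) (simp add: ss_def SS_0)

lemma ss_nz: "ss \<noteq> 0" using ss_0 by auto
lemma CC_nz: "CC \<noteq> 0" using CC_0 by auto
lemma X_nz: "(fps_X :: rat fps) \<noteq> 0" by simp

lemma f_ss: "f_fps * ss = CC"
  using inverse_mult_eq_1[of ss] ss_0 by (simp add: f_fps_def ss_def mult.assoc)

lemma f_0: "f_fps $ 0 = 1"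
  unfolding f_fps_def ss_def[symmetric] fps_mult_nth_0 fps_inverse_nth_0 ss_0 CC_0 by simp

lemma Dt_ss: "Dt ss = CC - ss"
proof -
  have "fps_X * Dt ss = fps_X * (CC - ss)"
  proof -
    have "fps_X * CC = Dt SS" by (simp add: Dt_SS)
    also have "\<dots> = fps_X * ss + fps_X * Dt ss" by (simp add: SS_ss Dt_mult)
    finally show ?thesis by (simp add: algebra_simps)
  qed
  then show ?thesis using X_nz by simp
qed

lemma f_ode: "Dt f_fps = f_fps + fps_X^2 - f_fps * f_fps"
proof -
  have "Dt f_fps * ss = (f_fps + fps_X^2 - f_fps * f_fps) * ss"
  proof -
    have "Dt f_fps * ss + f_fps * Dt ss = Dt CC" by (simp flip: f_ss add: Dt_mult)
    also have "\<dots> = fps_X^2 * ss" by (simp add: Dt_CC SS_ss power2_eq_square)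
    finally have "Dt f_fps * ss = fps_X^2 * ss - f_fps * (CC - ss)" by (simp add: Dt_ss algebra_simps)
    also have "\<dots> = (f_fps + fps_X^2 - f_fps * f_fps) * ss"
      by (simp flip: f_ss add: algebra_simps)
    finally show ?thesis .
  qed
  then show ?thesis using ss_nz by simp
qed

lemma f_double: "f_fps * sc 2 f_fps = fps_X^2 + f_fps * f_fps"
proof -
  have s2: "sc 2 ss = ss * CC"
  proof -
    have "fps_X * (2 * sc 2 ss) = fps_X * (2 * (ss * CC))"
    proof -
      have "fps_X * (2 * sc 2 ss) = sc 2 SS" by (simp add: SS_ss sc_mult sc_X fc2 algebra_simps)
      also have "\<dots> = 2 * SS * CC" by (rule sc_SS)
      also have "\<dots> = fps_X * (2 * (ss * CC))"
        by (simp add: SS_ss algebra_simps)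
      finally show ?thesis .
    qed
    then show ?thesis using X_nz two_nz by simp
  qed
  have a: "sc 2 f_fps * ss * CC = CC * CC + SS * SS"
    using arg_cong[OF f_ss, of "sc 2"] by (simp add: sc_mult s2 sc_CC mult.assoc)
  have "(f_fps * sc 2 f_fps) * (ss * ss * CC) = (fps_X^2 + f_fps * f_fps) * (ss * ss * CC)"
  proof -
    have "(f_fps * sc 2 f_fps) * (ss * ss * CC) = (f_fps * ss) * (sc 2 f_fps * ss * CC)"
      by (simp add: algebra_simps)
    also have "\<dots> = CC * (CC * CC + SS * SS)" by (simp add: f_ss a)
    also have "\<dots> = (fps_X^2 + f_fps * f_fps) * (ss * ss * CC)"
      by (simp add: SS_ss power2_eq_square algebra_simps flip: f_ss)
    finally show ?thesis .
  qed
  moreover have "ss * ss * CC \<noteq> 0" using ss_nz CC_nz by simp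
  ultimately show ?thesis by simp
qed


lemma sum_split_ends:
  fixes n :: nat
  assumes "1 \<le> n"
  shows "(\<Sum>i=0..n. g i) = g 0 + g n + (\<Sum>i=1..n-1. g i)"
proof -
  obtain m where n: "n = Suc m" using assms by (cases n) auto
  have "(\<Sum>i=0..n. g i) = (\<Sum>i=0..m. g i) + g n" by (simp add: n)
  also have "(\<Sum>i=0..m. g i) = g 0 + (\<Sum>i=Suc 0..m. g i)" by (rule sum.atLeast_Suc_atMost) simp
  finally show ?thesis by (simp add: n add_ac)
qed

lemma f_rec:
  "of_nat n * f_fps $ n = f_fps $ n + (if n = 2 then 1 else 0) - (\<Sum>i=0..n. f_fps $ i * f_fps $ (n - i))"
proof -
  have "Dt f_fps $ n = (f_fps + fps_X^2 - f_fps * f_fps) $ n" by (simp only: f_ode)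
  then show ?thesis by (simp add: fps_mult_nth)
qed

lemma f_rec2:
  assumes "1 \<le> n"
  shows "of_nat (n+1) * f_fps $ n = (if n = 2 then 1 else 0) - (\<Sum>i=1..n-1. f_fps $ i * f_fps $ (n - i))"
  using f_rec[of n] sum_split_ends[OF assms, of "\<lambda>i. f_fps $ i * f_fps $ (n - i)"] f_0
  by (simp add: algebra_simps)

lemma f_sign:
  "1 \<le> n \<Longrightarrow> (odd n \<longrightarrow> f_fps $ n = 0) \<and> (even n \<longrightarrow> (-1)^(n div 2 + 1) * f_fps $ n > 0)"
proof (induction n rule: less_induct)
  case (less n)
  have IHo: "f_fps $ j = 0" if "1 \<le> j" "j < n" "odd j" for j
    using less.IH[OF that(2,1)] that(3) by blast
  have IHe: "(-1)^(j div 2 + 1) * f_fps $ j > 0" if "1 \<le> j" "j < n" "even j" for j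
    using less.IH[OF that(2,1)] that(3) by blast
  define R where "R = (\<Sum>i=1..n-1. f_fps $ i * f_fps $ (n - i))"
  have rec: "of_nat (n+1) * f_fps $ n = (if n = 2 then 1 else 0) - R"
    unfolding R_def by (rule f_rec2[OF less.prems])
  show ?case
  proof (cases "odd n")
    case True
    have "R = 0" unfolding R_def
    proof (rule sum.neutral, intro ballI)
      fix i assume i: "i \<in> {1..n-1}"
      show "f_fps $ i * f_fps $ (n - i) = 0"
      proof (cases "odd i")
        case True
        have "i < n" "1 \<le> i" using i by auto
        then show ?thesis using IHo[of i] True by simp
      next
        case False
        then have "odd (n - i)" using \<open>odd n\<close> i by auto
        moreover have "n - i < n" "1 \<le> n - i" using i by auto
        ultimately show ?thesis using IHo[of "n - i"] by simp
      qed
    qed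
    moreover have "n \<noteq> 2" using True by auto
    ultimately have "of_nat (n+1) * f_fps $ n = 0" using rec by simp
    then show ?thesis using True by simp
  next
    case False
    then obtain d where nd: "n = 2 * d" by (auto elim: evenE)
    have d1: "1 \<le> d" using less.prems nd by simp
    have "(-1)^(d + 1) * f_fps $ n > 0"
    proof (cases "d = 1")
      case True
      then have n2: "n = 2" using nd by simp
      have "R = f_fps $ 1 * f_fps $ 1" unfolding R_def n2 by simp
      also have "\<dots> = 0" using IHo[of 1] n2 by simp
      finally have "3 * f_fps $ 2 = 1" using rec n2 by simp
      then have "f_fps $ 2 = 1/3" by simp
      then show ?thesis using n2 True by simp
    next
      case False
      then have d2: "2 \<le> d" using d1 by simp
      have term_nn: "0 \<le> (-1)^d * (f_fps $ i * f_fps $ (n - i))" if i: "i \<in> {1..n-1}" for i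
      proof (cases "odd i")
        case True
        have "i < n" "1 \<le> i" using i by auto
        then show ?thesis using IHo[of i] True by simp
      next
        case False
        then obtain a where ia: "i = 2 * a" by (auto elim: evenE)
        have a1: "1 \<le> a" "a < d" using i ia nd by auto
        have ni: "n - i = 2 * (d - a)" using ia nd a1 by simp
        have p1: "(-1)^(a + 1) * f_fps $ i > 0" using IHe[of i] i ia a1 nd by simp
        have "1 \<le> n - i" "n - i < n" "even (n - i)" using ni i a1 by auto
        then have "(-1)^((n - i) div 2 + 1) * f_fps $ (n - i) > 0" by (rule IHe)
        then have p2: "(-1)^(d - a + 1) * f_fps $ (n - i) > 0" using ni by simp
        have pos: "((-1)^(a + 1) * f_fps $ i) * ((-1)^(d - a + 1) * f_fps $ (n - i)) > 0"
          using p1 p2 by (rule mult_pos_pos)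
        have sign: "(-1::rat)^(a + 1) * (-1)^(d - a + 1) = (-1)^d"
        proof -
          have "(-1::rat)^(a + 1) * (-1)^(d - a + 1) = (-1)^(d + 2)"
            using a1 by (simp flip: power_add)
          then show ?thesis by simp
        qed
        have "(-1)^d * (f_fps $ i * f_fps $ (n - i)) =
            ((-1::rat)^(a + 1) * (-1)^(d - a + 1)) * (f_fps $ i * f_fps $ (n - i))"
          by (simp only: sign)
        also have "\<dots> = ((-1)^(a + 1) * f_fps $ i) * ((-1)^(d - a + 1) * f_fps $ (n - i))" by algebra
        finally have eq: "(-1)^d * (f_fps $ i * f_fps $ (n - i)) = ((-1)^(a + 1) * f_fps $ i) * ((-1)^(d - a + 1) * f_fps $ (n - i))" .
        have "(-1)^d * (f_fps $ i * f_fps $ (n - i)) > 0" by (subst eq) (rule pos)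
        then show ?thesis by simp
      qed
      have term_pos: "0 < (-1)^d * (f_fps $ 2 * f_fps $ (n - 2))"
      proof -
        have p1: "(-1)^(1 + 1) * f_fps $ 2 > 0" using IHe[of 2] nd d2 by simp
        have "1 \<le> n - 2" "n - 2 < n" "even (n - 2)" using nd d2 by auto
        then have "(-1)^((n - 2) div 2 + 1) * f_fps $ (n - 2) > 0" by (rule IHe)
        moreover have "(n - 2) div 2 = d - 1" using nd by simp
        ultimately have p2: "(-1)^(d - 1 + 1) * f_fps $ (n - 2) > 0" by simp
        have "((-1)^(1 + 1) * f_fps $ 2) * ((-1)^(d - 1 + 1) * f_fps $ (n - 2)) > 0"
          using p1 p2 by (rule mult_pos_pos)
        then show ?thesis using d2 by (simp add: algebra_simps)
      qed
      have "0 < (\<Sum>i=1..n-1. (-1)^d * (f_fps $ i * f_fps $ (n - i)))"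
        by (rule sum_pos2[where i=2]) (use term_nn term_pos nd d2 in auto)
      then have Rpos: "0 < (-1)^d * R" unfolding R_def by (simp add: sum_distrib_left)
      have "n \<noteq> 2" using nd d2 by simp
      then have r2: "of_nat (n+1) * f_fps $ n = - R" using rec by simp
      have "of_nat (n+1) * ((-1)^(d+1) * f_fps $ n) = (-1)^(d+1) * (of_nat (n+1) * f_fps $ n)"
        by (simp only: mult_ac)
      also have "\<dots> = (-1)^d * R" by (simp only: r2) simp
      finally have "0 < of_nat (n+1) * ((-1)^(d+1) * f_fps $ n)" using Rpos by simp
      then show ?thesis by (rule zero_less_mult_pos) simp
    qed
    then show ?thesis using nd by simp
  qed
qed

lemma f_odd: assumes "odd n" shows "f_fps $ n = 0"
proof -
  have "1 \<le> n" using assms by (cases n) auto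
  then show ?thesis using f_sign[of n] assms by simp
qed

lemma f_even_nz: "1 \<le> d \<Longrightarrow> f_fps $ (2 * d) \<noteq> 0"
  using f_sign[of "2*d"] by auto

definition nuf :: "rat fps" where "nuf = 1 + sc 2 f_fps - 2 * f_fps"

lemma Dt_f_nu: "Dt f_fps = f_fps * nuf"
  using f_double f_ode unfolding nuf_def by algebra

lemma nuf_nth: "nuf $ n = (if n = 0 then 1 else 0) + 2^n * f_fps $ n - 2 * f_fps $ n"
  unfolding nuf_def fc2[symmetric] by (simp add: fps_mult_left_const_nth)

lemma nuf_0: "nuf $ 0 = 0"
  by (simp add: nuf_nth f_0)

lemma nuf_odd: "odd n \<Longrightarrow> nuf $ n = 0"
  by (cases n) (simp_all add: nuf_nth f_odd)

lemma nuf_even_nz: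
  assumes "1 \<le> d" shows "nuf $ (2 * d) \<noteq> 0"
proof -
  have "(2::rat)^(2*d) \<ge> 2^2" by (rule power_increasing) (use assms in auto)
  then have "(2::rat)^(2*d) - 2 \<noteq> 0" by simp
  moreover have "nuf $ (2 * d) = (2^(2*d) - 2) * f_fps $ (2 * d)"
    using assms by (simp add: nuf_nth algebra_simps)
  ultimately show ?thesis using f_even_nz[OF assms] by simp
qed

definition phiE :: "rat fps" where "phiE = 1 + fps_X^2"
definition nuE :: "rat fps" where
  "nuE = Abs_fps (\<lambda>n. if 2 \<le> n \<and> even n then 2 * (-1)^(n div 2 - 1) else 0)"

lemma nuE_nth: "nuE $ n = (if 2 \<le> n \<and> even n then 2 * (-1)^(n div 2 - 1) else 0)"
  by (simp add: nuE_def)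

lemma Dt_phiE: "Dt phiE = phiE * nuE"
proof (rule fps_ext)
  fix n
  have r: "(phiE * nuE) $ n = nuE $ n + (if n < 2 then 0 else nuE $ (n - 2))"
    by (simp add: phiE_def distrib_right fps_X_power_mult_nth)
  show "Dt phiE $ n = (phiE * nuE) $ n"
  proof (cases "n < 2")
    case True then show ?thesis unfolding r by (auto simp: phiE_def nuE_nth)
  next
    case False
    show ?thesis
    proof (cases "n = 2")
      case True then show ?thesis unfolding r by (simp add: phiE_def nuE_nth)
    next
      case n2: False
      show ?thesis
      proof (cases "even n")
        case True
        then obtain d where nd: "n = 2 * d" by (auto elim: evenE)
        have d2: "2 \<le> d" using False n2 nd by auto
        have "(-1::rat)^(d - 1) = - ((-1)^(d - 2))"
        proof -
          have "d - 1 = Suc (d - 2)" using d2 by simp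
          then show ?thesis by simp
        qed
        moreover have "n - 2 = 2 * (d - 1)" using nd by simp
        moreover have "1 \<le> d - 1" "d - Suc (Suc 0) = d - 2" "Suc 0 \<le> d - Suc 0" using d2 by auto
        ultimately show ?thesis unfolding r using nd d2 n2 False
          by (simp add: phiE_def nuE_nth)
      next
        case False
        then show ?thesis unfolding r using n2 by (simp add: phiE_def nuE_nth)
      qed
    qed
  qed
qed

lemma nuE_0: "nuE $ 0 = 0" by (simp add: nuE_nth)
lemma nuE_odd: "odd n \<Longrightarrow> nuE $ n = 0" by (simp add: nuE_nth)
lemma nuE_even: "1 \<le> r \<Longrightarrow> nuE $ (2 * r) = 2 * (-1)^(r - 1)" by (simp add: nuE_nth)
lemma phiE_0: "phiE $ 0 = 1" by (simp add: phiE_def)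


definition subv :: "'v \<Rightarrow> rat fps \<Rightarrow> 'v mpoly fps" where
  "subv a F = Abs_fps (\<lambda>d. Poly_Mapping.single (Poly_Mapping.single a d) (F $ d))"

lemma subv_nth[simp]: "subv a F $ d = Poly_Mapping.single (Poly_Mapping.single a d) (F $ d)"
  by (simp add: subv_def)

lemma single_sum: "Poly_Mapping.single k (sum f B) = (\<Sum>x\<in>B. Poly_Mapping.single k (f x))"
  by (induction B rule: infinite_finite_induct) (simp_all add: single_add)

lemma subv_mult: "subv a (F * G) = subv a F * subv a G"
proof (rule fps_ext)
  fix n
  have "(subv a F * subv a G) $ n = (\<Sum>i=0..n. Poly_Mapping.single (Poly_Mapping.single a n) (F $ i * G $ (n - i)))"
    unfolding fps_mult_nth
  proof (rule sum.cong[OF refl])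
    fix i assume "i \<in> {0..n}"
    then have "Poly_Mapping.single a i + Poly_Mapping.single a (n - i) = Poly_Mapping.single a n"
      by (simp flip: single_add)
    then show "subv a F $ i * subv a G $ (n - i) = Poly_Mapping.single (Poly_Mapping.single a n) (F $ i * G $ (n - i))"
      by (simp add: mult_single)
  qed
  also have "\<dots> = subv a (F * G) $ n"
    by (simp add: fps_mult_nth single_sum)
  finally show "subv a (F * G) $ n = (subv a F * subv a G) $ n" by simp
qed

lemma of_nat_mult_single:
  fixes m :: "'v \<Rightarrow>\<^sub>0 nat"
  shows "of_nat k * Poly_Mapping.single m (c::rat) = Poly_Mapping.single m (of_nat k * c)"
proof -
  have "(of_nat k :: 'v mpoly) = Poly_Mapping.single 0 (of_nat k)" by simp
  then show ?thesis by (simp only: mult_single add_0_left)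
qed

lemma subv_Dt: "subv a (Dt F) = Dt (subv a F)"
  by (rule fps_ext) (simp add: of_nat_mult_single)

lemma Dt_prod:
  fixes Fj Nj :: "'i \<Rightarrow> 'a::comm_ring_1 fps"
  assumes "finite J" "\<And>j. j \<in> J \<Longrightarrow> Dt (Fj j) = Fj j * Nj j"
  shows "Dt (\<Prod>j\<in>J. Fj j) = (\<Prod>j\<in>J. Fj j) * (\<Sum>j\<in>J. Nj j)"
  using assms
proof (induction J rule: finite_induct)
  case empty then show ?case by simp
next
  case (insert x F)
  have "Dt (\<Prod>j\<in>insert x F. Fj j) = Dt (Fj x * (\<Prod>j\<in>F. Fj j))" using insert by simp
  also have "\<dots> = Fj x * Nj x * (\<Prod>j\<in>F. Fj j) + Fj x * ((\<Prod>j\<in>F. Fj j) * (\<Sum>j\<in>F. Nj j))"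
    using insert by (simp add: Dt_mult)
  also have "\<dots> = (\<Prod>j\<in>insert x F. Fj j) * (\<Sum>j\<in>insert x F. Nj j)"
    using insert by (simp add: algebra_simps)
  finally show ?case .
qed

definition Pw :: "(nat \<Rightarrow> 'v) \<Rightarrow> nat \<Rightarrow> nat \<Rightarrow> 'v mpoly" where
  "Pw av n d = (\<Sum>j\<in>{1..n}. Poly_Mapping.single (Poly_Mapping.single (av j) d) 1)"

lemma subv_single_scale: "Poly_Mapping.single (Poly_Mapping.single a d) (c::rat) = mconst c * Poly_Mapping.single (Poly_Mapping.single a d) 1"
  by (simp add: mconst_def mult_single)

lemma coeff_identity:
  fixes av :: "nat \<Rightarrow> 'v" and n m :: nat and phi nu :: "rat fps"
  assumes D: "Dt phi = phi * nu"
  defines "G \<equiv> (\<Prod>j\<in>{1..n}. subv (av j) phi)"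
  shows "of_nat m * G $ m = (\<Sum>d=0..m. mconst (nu $ d) * Pw av n d * G $ (m - d))"
proof -
  have "Dt G = G * (\<Sum>j\<in>{1..n}. subv (av j) nu)"
    unfolding G_def
  proof (rule Dt_prod)
    fix j show "Dt (subv (av j) phi) = subv (av j) phi * subv (av j) nu"
      by (simp flip: subv_Dt subv_mult add: D)
  qed simp
  then have "Dt G $ m = ((\<Sum>j\<in>{1..n}. subv (av j) nu) * G) $ m" by (simp add: mult.commute)
  also have "\<dots> = (\<Sum>d=0..m. (\<Sum>j\<in>{1..n}. subv (av j) nu) $ d * G $ (m - d))"
    by (rule fps_mult_nth)
  also have "\<dots> = (\<Sum>d=0..m. mconst (nu $ d) * Pw av n d * G $ (m - d))"
  proof (rule sum.cong[OF refl])
    fix d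
    have "(\<Sum>j\<in>{1..n}. subv (av j) nu) $ d = mconst (nu $ d) * Pw av n d"
      unfolding fps_sum_nth subv_nth Pw_def sum_distrib_left
      by (rule sum.cong[OF refl]) (rule subv_single_scale)
    then show "(\<Sum>j\<in>{1..n}. subv (av j) nu) $ d * G $ (m - d) = mconst (nu $ d) * Pw av n d * G $ (m - d)"
      by simp
  qed
  finally show ?thesis by simp
qed

lemma subv_0: "subv a F $ 0 = mconst (F $ 0)"
  by (simp add: mconst_def)

lemma prod_subv_0:
  assumes "F $ 0 = 1"
  shows "(\<Prod>j\<in>J. subv (av j) F) $ 0 = 1"
proof (induction J rule: infinite_finite_induct)
  case (insert x F')
  then show ?case using assms by (simp add: subv_0)
qed simp_all


definition eps :: "(nat \<Rightarrow> 'v) \<Rightarrow> nat \<Rightarrow> nat \<Rightarrow> 'v mpoly" where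
  "eps av n i = (\<Prod>j\<in>{1..n}. subv (av j) phiE) $ (2 * i)"

lemma f_subst_subv: "f_subst = (\<lambda>v. subv v f_fps)"
  by (rule ext) (simp add: f_subst_def subv_def)

lemma ell_alt: "ell av n i = (\<Prod>j\<in>{1..n}. subv (av j) f_fps) $ (2 * i)"
  by (simp add: ell_def f_subst_subv)

definition Smem :: "(svar \<Rightarrow> 'v mpoly) \<Rightarrow> nat \<Rightarrow> 'v mpoly \<Rightarrow> bool" where
  "Smem eF j Q \<longleftrightarrow> (\<exists>R. mvars R \<subseteq> {X r | r. 1 \<le> r \<and> r \<le> j} \<and> Q = meval eF R)"

lemma Smem_const: "Smem eF j (mconst c)"
  unfolding Smem_def by (rule exI[of _ "mconst c"]) simp

lemma Smem_0: "Smem eF j 0"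
  using Smem_const[of eF j 0] by simp

lemma Smem_add: "Smem eF j P \<Longrightarrow> Smem eF j Q \<Longrightarrow> Smem eF j (P + Q)"
  unfolding Smem_def
proof (elim exE conjE)
  fix R1 R2 assume "mvars R1 \<subseteq> {X r | r. 1 \<le> r \<and> r \<le> j}" "P = meval eF R1"
    "mvars R2 \<subseteq> {X r | r. 1 \<le> r \<and> r \<le> j}" "Q = meval eF R2"
  then show "\<exists>R. mvars R \<subseteq> {X r | r. 1 \<le> r \<and> r \<le> j} \<and> P + Q = meval eF R"
    using mvars_add[of R1 R2] by (intro exI[of _ "R1 + R2"]) (auto simp: meval_add)
qed

lemma Smem_mult: "Smem eF j P \<Longrightarrow> Smem eF j Q \<Longrightarrow> Smem eF j (P * Q)"
  unfolding Smem_def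
proof (elim exE conjE)
  fix R1 R2 assume "mvars R1 \<subseteq> {X r | r. 1 \<le> r \<and> r \<le> j}" "P = meval eF R1"
    "mvars R2 \<subseteq> {X r | r. 1 \<le> r \<and> r \<le> j}" "Q = meval eF R2"
  then show "\<exists>R. mvars R \<subseteq> {X r | r. 1 \<le> r \<and> r \<le> j} \<and> P * Q = meval eF R"
    using mvars_mult[of R1 R2] by (intro exI[of _ "R1 * R2"]) (auto simp: meval_mult)
qed

lemma Smem_uminus: "Smem eF j P \<Longrightarrow> Smem eF j (- P)"
  using Smem_mult[OF Smem_const[of eF j "-1"]] by (simp add: mconst_def single_uminus)

lemma Smem_diff: "Smem eF j P \<Longrightarrow> Smem eF j Q \<Longrightarrow> Smem eF j (P - Q)"
  using Smem_add[of eF j P "- Q"] Smem_uminus[of eF j Q] by simp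

lemma Smem_cmult: "Smem eF j P \<Longrightarrow> Smem eF j (mconst c * P)"
  using Smem_mult[OF Smem_const] by blast

lemma Smem_sum: "(\<And>d. d \<in> B \<Longrightarrow> Smem eF j (g d)) \<Longrightarrow> Smem eF j (sum g B)"
proof (induction B rule: infinite_finite_induct)
  case (infinite B) then show ?case by (simp add: Smem_0)
next
  case empty then show ?case by (simp add: Smem_0)
next
  case (insert x F) then show ?case by (simp add: Smem_add)
qed

lemma Smem_mono: assumes "j \<le> j'" "Smem eF j Q" shows "Smem eF j' Q"
proof -
  obtain R where R: "mvars R \<subseteq> {X r | r. 1 \<le> r \<and> r \<le> j}" "Q = meval eF R"
    using assms(2) unfolding Smem_def by blast
  have "mvars R \<subseteq> {X r | r. 1 \<le> r \<and> r \<le> j'}" using R(1) assms(1) by auto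
  then show ?thesis using R(2) unfolding Smem_def by blast
qed

lemma Smem_var: "1 \<le> r \<Longrightarrow> r \<le> j \<Longrightarrow> Smem eF j (eF (X r))"
  unfolding Smem_def by (rule exI[of _ "mvar (X r)"]) auto

lemma sum_last: "1 \<le> (m::nat) \<Longrightarrow> (\<Sum>d=0..m. g d) = (\<Sum>d=0..m-1. g d) + g m"
  by (cases m) simp_all

lemma neg1_sq: "(-1::rat)^k * (-1)^k = 1"
  by (simp flip: power_mult_distrib)

locale ctx =
  fixes av :: "nat \<Rightarrow> 'v" and n K :: nat and eF :: "svar \<Rightarrow> 'v mpoly"
  assumes eFX: "\<And>r. 1 \<le> r \<Longrightarrow> r < K \<Longrightarrow> eF (X r) = eps av n r"
begin

abbreviation "EG \<equiv> (\<Prod>j\<in>{1..n}. subv (av j) phiE)"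
abbreviation "FG \<equiv> (\<Prod>j\<in>{1..n}. subv (av j) f_fps)"

lemma eps_S: "1 \<le> r \<Longrightarrow> r < K \<Longrightarrow> r \<le> j \<Longrightarrow> Smem eF j (eps av n r)"
  using Smem_var[of r j eF] eFX[of r] by simp

lemma P_rel: "1 \<le> r \<Longrightarrow> r < K \<Longrightarrow>
  Smem eF (r - 1) (Pw av n (2 * r) - mconst ((-1)^(r-1) * of_nat r) * eps av n r)"
proof (induction r rule: less_induct)
  case (less r)
  have Pw_S: "Smem eF j (Pw av n (2 * s))" if "1 \<le> s" "s < r" "s \<le> j" for s j
  proof -
    have "Smem eF (s - 1) (Pw av n (2 * s) - mconst ((-1)^(s-1) * of_nat s) * eps av n s)"
      using less.IH[of s] that less.prems by simp
    then have a: "Smem eF j (Pw av n (2 * s) - mconst ((-1)^(s-1) * of_nat s) * eps av n s)"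
      by (rule Smem_mono[rotated]) (use that in simp)
    have b: "Smem eF j (mconst ((-1)^(s-1) * of_nat s) * eps av n s)"
      by (rule Smem_cmult, rule eps_S) (use that less.prems in auto)
    show ?thesis using Smem_add[OF a b] by simp
  qed
  define u :: rat where "u = (-1)^(r-1)"
  define Rest where "Rest = (\<Sum>d=0..2*r-1. mconst (nuE $ d) * Pw av n d * EG $ (2*r - d))"
  have id: "of_nat (2*r) * EG $ (2*r) = (\<Sum>d=0..2*r. mconst (nuE $ d) * Pw av n d * EG $ (2*r - d))"
    by (rule coeff_identity[OF Dt_phiE])
  have split: "(\<Sum>d=0..2*r. mconst (nuE $ d) * Pw av n d * EG $ (2*r - d)) =
      Rest + mconst (nuE $ (2*r)) * Pw av n (2*r) * EG $ 0"
    unfolding Rest_def by (subst sum_last) (use less.prems in simp_all)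
  have EG0: "EG $ 0 = 1" by (rule prod_subv_0) (simp add: phiE_0)
  have H: "mconst (2 * u) * Pw av n (2*r) = of_nat (2*r) * eps av n r - Rest"
    using id split EG0 nuE_even[OF less.prems(1)] by (simp add: eps_def u_def)
  have RestS: "Smem eF (r - 1) Rest"
    unfolding Rest_def
  proof (rule Smem_sum)
    fix d assume d: "d \<in> {0..2*r-1}"
    show "Smem eF (r - 1) (mconst (nuE $ d) * Pw av n d * EG $ (2*r - d))"
    proof (cases "d = 0 \<or> odd d")
      case True
      then have "nuE $ d = 0" using nuE_0 nuE_odd by auto
      then show ?thesis by (simp add: Smem_0)
    next
      case False
      then obtain s where ds: "d = 2 * s" "1 \<le> s" by (auto elim: evenE)
      have sr: "s \<le> r - 1" using d ds by auto
      have e: "EG $ (2*r - d) = eps av n (r - s)"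
        using ds by (simp add: eps_def right_diff_distrib')
      have "Smem eF (r - 1) (eps av n (r - s))"
        by (rule eps_S) (use ds sr less.prems in auto)
      moreover have "Smem eF (r - 1) (Pw av n d)"
        unfolding ds(1) by (rule Pw_S) (use ds sr less.prems in auto)
      ultimately show ?thesis unfolding e
        by (intro Smem_mult Smem_cmult) (simp_all add: mult.assoc Smem_mult Smem_cmult)
    qed
  qed
  have c1: "mconst (u / 2) * mconst (2 * u) = 1"
    by (simp flip: mconst_mult add: u_def neg1_sq)
  have c2: "mconst (u / 2) * of_nat (2 * r) = mconst (u * of_nat r)"
    by (simp flip: mconst_of_nat mconst_mult)
  have "Pw av n (2*r) = mconst (u / 2) * (mconst (2 * u) * Pw av n (2*r))"
    by (simp add: mult.assoc[symmetric] c1)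
  also have "\<dots> = mconst (u / 2) * (of_nat (2*r) * eps av n r - Rest)" by (simp only: H)
  also have "\<dots> = mconst (u * of_nat r) * eps av n r - mconst (u / 2) * Rest"
    by (simp only: right_diff_distrib mult.assoc[symmetric] c2)
  finally have "Pw av n (2 * r) - mconst ((-1)^(r-1) * of_nat r) * eps av n r = - (mconst (u / 2) * Rest)"
    by (simp add: u_def)
  then show ?case using Smem_uminus[OF Smem_cmult[OF RestS]] by simp
qed

definition cl :: "nat \<Rightarrow> rat" where "cl r = nuf $ (2 * r) * (-1)^(r-1) / 2"

lemma cl_nz: "1 \<le> r \<Longrightarrow> cl r \<noteq> 0"
  using nuf_even_nz[of r] by (simp add: cl_def)

lemma ell_rel: "1 \<le> r \<Longrightarrow> r < K \<Longrightarrow>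
  Smem eF (r - 1) (ell av n r - mconst (cl r) * eps av n r)"
proof (induction r rule: less_induct)
  case (less r)
  have ell_S: "Smem eF j (ell av n s)" if "1 \<le> s" "s < r" "s \<le> j" for s j
  proof -
    have "Smem eF (s - 1) (ell av n s - mconst (cl s) * eps av n s)"
      using less.IH[of s] that less.prems by simp
    then have a: "Smem eF j (ell av n s - mconst (cl s) * eps av n s)"
      by (rule Smem_mono[rotated]) (use that in simp)
    have b: "Smem eF j (mconst (cl s) * eps av n s)"
      by (rule Smem_cmult, rule eps_S) (use that less.prems in auto)
    show ?thesis using Smem_add[OF a b] by simp
  qed
  have Pw_S: "Smem eF j (Pw av n (2 * s))" if "1 \<le> s" "s < K" "s \<le> j" for s j
  proof -
    have "Smem eF (s - 1) (Pw av n (2 * s) - mconst ((-1)^(s-1) * of_nat s) * eps av n s)"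
      using P_rel[of s] that by simp
    then have a: "Smem eF j (Pw av n (2 * s) - mconst ((-1)^(s-1) * of_nat s) * eps av n s)"
      by (rule Smem_mono[rotated]) (use that in simp)
    have b: "Smem eF j (mconst ((-1)^(s-1) * of_nat s) * eps av n s)"
      by (rule Smem_cmult, rule eps_S) (use that in auto)
    show ?thesis using Smem_add[OF a b] by simp
  qed
  define u :: rat where "u = (-1)^(r-1)"
  define nu where "nu = nuf $ (2 * r)"
  define Rest where "Rest = (\<Sum>d=0..2*r-1. mconst (nuf $ d) * Pw av n d * FG $ (2*r - d))"
  define W where "W = Pw av n (2 * r) - mconst (u * of_nat r) * eps av n r"
  have WS: "Smem eF (r - 1) W" unfolding W_def u_def using P_rel[OF less.prems] .
  have id: "of_nat (2*r) * FG $ (2*r) = (\<Sum>d=0..2*r. mconst (nuf $ d) * Pw av n d * FG $ (2*r - d))"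
    by (rule coeff_identity[OF Dt_f_nu])
  have split: "(\<Sum>d=0..2*r. mconst (nuf $ d) * Pw av n d * FG $ (2*r - d)) =
      Rest + mconst (nuf $ (2*r)) * Pw av n (2*r) * FG $ 0"
    unfolding Rest_def by (subst sum_last) (use less.prems in simp_all)
  have FG0: "FG $ 0 = 1" by (rule prod_subv_0) (simp add: f_0)
  have H: "of_nat (2*r) * ell av n r = Rest + mconst nu * Pw av n (2*r)"
    using id split FG0 by (simp add: ell_alt nu_def)
  have RestS: "Smem eF (r - 1) Rest"
    unfolding Rest_def
  proof (rule Smem_sum)
    fix d assume d: "d \<in> {0..2*r-1}"
    show "Smem eF (r - 1) (mconst (nuf $ d) * Pw av n d * FG $ (2*r - d))"
    proof (cases "d = 0 \<or> odd d")
      case True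
      then have "nuf $ d = 0" using nuf_0 nuf_odd by auto
      then show ?thesis by (simp add: Smem_0)
    next
      case False
      then obtain s where ds: "d = 2 * s" "1 \<le> s" by (auto elim: evenE)
      have sr: "s \<le> r - 1" using d ds by auto
      have e: "FG $ (2*r - d) = ell av n (r - s)"
        using ds by (simp add: ell_alt right_diff_distrib')
      have "Smem eF (r - 1) (ell av n (r - s))"
        by (rule ell_S) (use ds sr less.prems in auto)
      moreover have "Smem eF (r - 1) (Pw av n d)"
        unfolding ds(1) by (rule Pw_S) (use ds sr less.prems in auto)
      ultimately show ?thesis unfolding e
        by (intro Smem_mult Smem_cmult) (simp_all add: mult.assoc Smem_mult Smem_cmult)
    qed
  qed
  define Z where "Z = mconst (1 / of_nat (2*r)) * (Rest + mconst nu * W)"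
  have ZS: "Smem eF (r - 1) Z"
    unfolding Z_def by (intro Smem_cmult Smem_add RestS WS)
  have r0: "(of_nat (2*r) :: rat) \<noteq> 0" using less.prems by simp
  have c1: "mconst (1 / of_nat (2*r)) * of_nat (2*r) = 1"
    using r0 by (simp flip: mconst_of_nat mconst_mult)
  have c2: "mconst (1 / of_nat (2*r)) * (mconst nu * mconst (u * of_nat r)) = mconst (cl r)"
  proof -
    have "1 / of_nat (2*r) * (nu * (u * of_nat r)) = cl r"
      using r0 by (simp add: cl_def nu_def u_def field_simps)
    then show ?thesis by (simp flip: mconst_mult)
  qed
  have "ell av n r = mconst (1 / of_nat (2*r)) * (of_nat (2*r) * ell av n r)"
    by (simp only: mult.assoc[symmetric] c1 mult_1_left)
  also have "\<dots> = mconst (1 / of_nat (2*r)) * (Rest + mconst nu * (W + mconst (u * of_nat r) * eps av n r))"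
    by (simp only: H W_def diff_add_cancel)
  also have "\<dots> = Z + mconst (1 / of_nat (2*r)) * (mconst nu * mconst (u * of_nat r)) * eps av n r"
    unfolding Z_def by (simp only: distrib_left mult.assoc add.assoc)
  also have "\<dots> = Z + mconst (cl r) * eps av n r" by (simp only: c2)
  finally show ?case using ZS by simp
qed

lemma ell_S: "1 \<le> r \<Longrightarrow> r < K \<Longrightarrow> Smem eF r (ell av n r)"
proof -
  assume r: "1 \<le> r" "r < K"
  have a: "Smem eF r (ell av n r - mconst (cl r) * eps av n r)"
    by (rule Smem_mono[OF _ ell_rel[OF r]]) simp
  have b: "Smem eF r (mconst (cl r) * eps av n r)"
    by (rule Smem_cmult, rule eps_S) (use r in auto)
  show ?thesis using Smem_add[OF a b] by simp
qed

end


instantiation svar :: linorder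
begin
fun less_eq_svar :: "svar \<Rightarrow> svar \<Rightarrow> bool" where
  "less_eq_svar E _ = True"
| "less_eq_svar (X i) E = False"
| "less_eq_svar (X i) (X j) = (j \<le> i)"
definition less_svar :: "svar \<Rightarrow> svar \<Rightarrow> bool" where
  "less_svar a b = (a \<le> b \<and> \<not> b \<le> a)"
instance
proof
  fix x y z :: svar
  show "(x < y) = (x \<le> y \<and> \<not> y \<le> x)" by (simp add: less_svar_def)
  show "x \<le> x" by (cases x) auto
  show "x \<le> y \<Longrightarrow> y \<le> z \<Longrightarrow> x \<le> z" by (cases x; cases y; cases z) auto
  show "x \<le> y \<Longrightarrow> y \<le> x \<Longrightarrow> x = y" by (cases x; cases y) auto
  show "x \<le> y \<or> y \<le> x" by (cases x; cases y) auto
qed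
end

instantiation tvar :: linorder
begin
fun less_eq_tvar :: "tvar \<Rightarrow> tvar \<Rightarrow> bool" where
  "less_eq_tvar (A i) (A j) = (i \<le> j)"
| "less_eq_tvar (A i) (Y j) = True"
| "less_eq_tvar (Y i) (A j) = False"
| "less_eq_tvar (Y i) (Y j) = (i \<le> j)"
definition less_tvar :: "tvar \<Rightarrow> tvar \<Rightarrow> bool" where
  "less_tvar a b = (a \<le> b \<and> \<not> b \<le> a)"
instance
proof
  fix x y z :: tvar
  show "(x < y) = (x \<le> y \<and> \<not> y \<le> x)" by (simp add: less_tvar_def)
  show "x \<le> x" by (cases x) auto
  show "x \<le> y \<Longrightarrow> y \<le> z \<Longrightarrow> x \<le> z" by (cases x; cases y; cases z) auto
  show "x \<le> y \<Longrightarrow> y \<le> x \<Longrightarrow> x = y" by (cases x; cases y) auto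
  show "x \<le> y \<or> y \<le> x" by (cases x; cases y) auto
qed
end

lemma strict_mono_A: "strict_mono A"
  by (rule strict_monoI) (simp add: less_tvar_def)

lemma X_less_iff: "X i < X j \<longleftrightarrow> j < i"
  by (auto simp: less_svar_def)

lemma less_pm_iff: "(a::'a::linorder \<Rightarrow>\<^sub>0 nat) < b \<longleftrightarrow> less_fun (Poly_Mapping.lookup a) (Poly_Mapping.lookup b)"
  by transfer simp

lemma single_nz[simp]: "c \<noteq> 0 \<Longrightarrow> Poly_Mapping.single m c \<noteq> 0"
proof
  assume "c \<noteq> 0" "Poly_Mapping.single m c = 0"
  then have "Poly_Mapping.lookup (Poly_Mapping.single m c) m = 0" by simp
  with \<open>c \<noteq> 0\<close> show False by simp
qed

lemma lm_single: "c \<noteq> 0 \<Longrightarrow> lm (Poly_Mapping.single m c :: 'v::linorder mpoly) = m"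
  by (simp add: lm_def)

lemma lc_single: "c \<noteq> 0 \<Longrightarrow> lc (Poly_Mapping.single m c :: 'v::linorder mpoly) = c"
  by (simp add: lc_def lm_single)

lemma lm_add_less:
  fixes P Q :: "'v::linorder mpoly"
  assumes P: "P \<noteq> 0" and Q: "\<And>m. m \<in> Poly_Mapping.keys Q \<Longrightarrow> m < lm P"
  shows "P + Q \<noteq> 0 \<and> lm (P + Q) = lm P \<and> lc (P + Q) = lc P"
proof -
  have q0: "Poly_Mapping.lookup Q (lm P) = 0"
    using Q by (auto simp: in_keys_iff)
  have key: "Poly_Mapping.lookup (P + Q) (lm P) = lc P"
    by (simp add: lookup_add q0 lc_def)
  then have inK: "lm P \<in> Poly_Mapping.keys (P + Q)" using lc_nz[OF P] by (simp add: in_keys_iff)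
  then have nz: "P + Q \<noteq> 0" by auto
  have le: "m \<le> lm P" if "m \<in> Poly_Mapping.keys (P + Q)" for m
  proof -
    have "m \<in> Poly_Mapping.keys P \<or> m \<in> Poly_Mapping.keys Q" using keys_add[of P Q] that by blast
    then show ?thesis using lm_max[of m P] Q[of m] by auto
  qed
  have "lm (P + Q) = lm P"
    by (rule antisym) (use le[OF lm_in[OF nz]] lm_max[OF inK] in auto)
  then show ?thesis using nz key by (simp add: lc_def)
qed

lemma lm_less_keys: "Q \<noteq> 0 \<Longrightarrow> lm Q < M \<Longrightarrow> m \<in> Poly_Mapping.keys Q \<Longrightarrow> m < M"
  using lm_max[of m Q] by auto

section \<open>Leading monomials of e_i and sigma\<close>

definition Mi :: "(nat \<Rightarrow> 'v) \<Rightarrow> nat \<Rightarrow> ('v \<Rightarrow>\<^sub>0 nat)" where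
  "Mi av i = (\<Sum>j\<in>{1..i}. Poly_Mapping.single (av j) 2)"

lemma lookup_Mi: "Poly_Mapping.lookup (Mi av i) v = (\<Sum>j\<in>{1..i}. if av j = v then 2 else 0)"
  by (simp add: Mi_def lookup_sum lookup_single when_def)

lemma lookup_Mi_av:
  assumes "inj av"
  shows "Poly_Mapping.lookup (Mi av i) (av j) = (if 1 \<le> j \<and> j \<le> i then 2 else 0)"
proof -
  have "(\<Sum>j'\<in>{1..i}. if av j' = av j then 2 else (0::nat)) = (\<Sum>j'\<in>{1..i}. if j' = j then 2 else 0)"
    using assms by (intro sum.cong refl) (auto dest: injD)
  then show ?thesis by (simp add: lookup_Mi)
qed

lemma lookup_Mi_notin: "v \<notin> range av \<Longrightarrow> Poly_Mapping.lookup (Mi av i) v = 0"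
  by (auto simp: lookup_Mi intro!: sum.neutral)

definition Qv :: "'v \<Rightarrow> 'v mpoly" where
  "Qv a = Poly_Mapping.single (Poly_Mapping.single a 2) 1"

lemma subv_phiE: "subv a phiE = 1 + fps_const (Qv a) * fps_X^2"
proof (rule fps_ext)
  fix d
  show "subv a phiE $ d = (1 + fps_const (Qv a) * fps_X^2) $ d"
    by (cases "d = 0"; cases "d = 2") (simp_all add: phiE_def Qv_def)
qed

lemma EG_Suc: "(\<Prod>j\<in>{1..Suc n}. subv (av j) phiE) = subv (av (Suc n)) phiE * (\<Prod>j\<in>{1..n}. subv (av j) phiE)"
proof -
  have "{1..Suc n} = insert (Suc n) {1..n}" by auto
  then show ?thesis by (simp only:) (rule prod.insert, auto)
qed

lemma eps_Suc:
  assumes "1 \<le> i"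
  shows "eps av (Suc n) i = eps av n i + Qv (av (Suc n)) * eps av n (i - 1)"
proof -
  let ?H = "\<Prod>j\<in>{1..n}. subv (av j) phiE"
  have "eps av (Suc n) i = (subv (av (Suc n)) phiE * ?H) $ (2 * i)"
    by (simp only: eps_def EG_Suc)
  also have "\<dots> = ((1 + fps_const (Qv (av (Suc n))) * fps_X^2) * ?H) $ (2 * i)"
    by (simp only: subv_phiE[of "av (Suc n)"])
  also have "\<dots> = ?H $ (2 * i) + Qv (av (Suc n)) * (fps_X^2 * ?H) $ (2 * i)"
    by (simp add: distrib_right mult.assoc)
  also have "\<dots> = eps av n i + Qv (av (Suc n)) * eps av n (i - 1)"
    using assms by (simp add: fps_X_power_mult_nth eps_def right_diff_distrib')
  finally show ?thesis .
qed

lemma eps_0: "eps av n 0 = 1"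
  unfolding eps_def by (simp add: prod_subv_0 phiE_0)

lemma eps_zero_n: "eps av 0 i = (if i = 0 then 1 else 0)"
  unfolding eps_def by simp

lemma Qv_nz[simp]: "Qv a \<noteq> 0"
  by (simp add: Qv_def)

lemma lm_Qv: "Qv a \<noteq> 0 \<and> lm (Qv a) = Poly_Mapping.single a 2 \<and> lc (Qv a) = 1"
  by (simp add: Qv_def lm_single lc_single)

lemma lm_one: "lm (1 :: 'v::linorder mpoly) = 0 \<and> lc (1 :: 'v mpoly) = 1"
  by (simp add: lm_def lc_def)

lemma Mi_Suc: "Mi av (Suc i) = Mi av i + Poly_Mapping.single (av (Suc i)) 2"
  by (simp add: Mi_def)

lemma eps_lead:
  fixes av :: "nat \<Rightarrow> 'v::linorder"
  assumes sm: "strict_mono av"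
  shows "(i \<le> n \<longrightarrow> eps av n i \<noteq> 0 \<and> lm (eps av n i) = Mi av i \<and> lc (eps av n i) = 1) \<and>
         (n < i \<longrightarrow> eps av n i = 0)"
proof (induction n arbitrary: i)
  case 0
  show ?case by (simp add: eps_zero_n Mi_def lm_one)
next
  case (Suc n)
  have inj: "inj av" using sm by (rule strict_mono_imp_inj_on)
  show ?case
  proof (cases "i = 0")
    case True then show ?thesis by (simp add: eps_0 Mi_def lm_one)
  next
    case False
    then have i1: "1 \<le> i" by simp
    note rec = eps_Suc[OF i1, of av n]
    show ?thesis
    proof (cases "i \<le> n")
      case True
      have A: "eps av n i \<noteq> 0" "lm (eps av n i) = Mi av i" "lc (eps av n i) = 1"
        using Suc.IH[of i] True by auto
      have B: "eps av n (i - 1) \<noteq> 0" "lm (eps av n (i - 1)) = Mi av (i - 1)" "lc (eps av n (i - 1)) = 1"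
        using Suc.IH[of "i - 1"] True by auto
      have Bnz: "Qv (av (Suc n)) * eps av n (i - 1) \<noteq> 0" using B(1) by simp
      have lmB: "lm (Qv (av (Suc n)) * eps av n (i - 1)) = Poly_Mapping.single (av (Suc n)) 2 + Mi av (i - 1)"
        using lm_mult[of "Qv (av (Suc n))" "eps av n (i - 1)"] lm_Qv[of "av (Suc n)"] B by simp
      have Mi_i: "Mi av i = Mi av (i - 1) + Poly_Mapping.single (av i) 2"
        using Mi_Suc[of av "i - 1"] i1 by simp
      have less: "Poly_Mapping.single (av (Suc n)) 2 + Mi av (i - 1) < Mi av i"
        unfolding less_pm_iff
      proof (rule less_funI, rule exI[where x="av i"], rule conjI)
        have ne: "av (Suc n) \<noteq> av i" using inj True by (auto dest: injD)
        show "Poly_Mapping.lookup (Poly_Mapping.single (av (Suc n)) 2 + Mi av (i - 1)) (av i)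
             < Poly_Mapping.lookup (Mi av i) (av i)"
          using ne i1 by (simp add: lookup_add lookup_single lookup_Mi_av[OF inj])
        show "\<forall>k'<av i. Poly_Mapping.lookup (Poly_Mapping.single (av (Suc n)) 2 + Mi av (i - 1)) k' =
             Poly_Mapping.lookup (Mi av i) k'"
        proof (intro allI impI)
          fix k' assume k': "k' < av i"
          have "av i < av (Suc n)" using sm True by (simp add: strict_mono_less)
          then have "k' \<noteq> av (Suc n)" "k' \<noteq> av i" using k' by auto
          then show "Poly_Mapping.lookup (Poly_Mapping.single (av (Suc n)) 2 + Mi av (i - 1)) k' =
             Poly_Mapping.lookup (Mi av i) k'"
            by (simp add: Mi_i lookup_add lookup_single when_def)
        qed
      qed
      have "eps av n i + Qv (av (Suc n)) * eps av n (i - 1) \<noteq> 0 \<and>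
            lm (eps av n i + Qv (av (Suc n)) * eps av n (i - 1)) = lm (eps av n i) \<and>
            lc (eps av n i + Qv (av (Suc n)) * eps av n (i - 1)) = lc (eps av n i)"
        by (rule lm_add_less[OF A(1)], rule lm_less_keys[OF Bnz]) (use lmB less A in auto)
      then show ?thesis using rec A True by simp
    next
      case False
      show ?thesis
      proof (cases "i = Suc n")
        case True
        have A: "eps av n i = 0" using Suc.IH[of i] True by simp
        have B: "eps av n n \<noteq> 0" "lm (eps av n n) = Mi av n" "lc (eps av n n) = 1"
          using Suc.IH[of n] by auto
        have "Qv (av (Suc n)) * eps av n n \<noteq> 0" using B(1) by simp
        moreover have "lm (Qv (av (Suc n)) * eps av n n) = Mi av (Suc n) \<and>
                       lc (Qv (av (Suc n)) * eps av n n) = 1"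
          using lm_mult[of "Qv (av (Suc n))" "eps av n n"] lm_Qv[of "av (Suc n)"] B by (simp add: Mi_Suc add.commute)
        ultimately show ?thesis using rec A True by simp
      next
        case False
        then have "n < i - 1" using \<open>\<not> i \<le> n\<close> by simp
        then have "eps av n i = 0" "eps av n (i - 1) = 0"
          using Suc.IH[of i] Suc.IH[of "i - 1"] by auto
        then show ?thesis using rec \<open>\<not> i \<le> n\<close> False by simp
      qed
    qed
  qed
qed

definition Sg :: "(nat \<Rightarrow> 'v) \<Rightarrow> nat \<Rightarrow> ('v \<Rightarrow>\<^sub>0 nat)" where
  "Sg av n = (\<Sum>j\<in>{1..n}. Poly_Mapping.single (av j) 1)"

lemma prod_single1: "(\<Prod>j\<in>J. Poly_Mapping.single (m j) (1::rat)) = Poly_Mapping.single (\<Sum>j\<in>J. m j) 1"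
  by (induction J rule: infinite_finite_induct) (simp_all add: mult_single)

lemma sigma_eq: "sigma_top av n = Poly_Mapping.single (Sg av n) 1"
  by (simp add: sigma_top_def mvar_def Sg_def prod_single1)

lemma sigma_lead: "sigma_top av n \<noteq> (0::'v::linorder mpoly) \<and> lm (sigma_top av n) = Sg av n"
  by (simp add: sigma_eq lm_single)

lemma lookup_Sg_av:
  assumes "inj av"
  shows "Poly_Mapping.lookup (Sg av n) (av j) = (if 1 \<le> j \<and> j \<le> n then 1 else 0)"
proof -
  have "Poly_Mapping.lookup (Sg av n) (av j) = (\<Sum>j'\<in>{1..n}. if j' = j then 1 else 0)"
    unfolding Sg_def lookup_sum lookup_single when_def using assms
    by (intro sum.cong refl) (auto dest: injD)
  then show ?thesis by simp
qed

lemma lookup_Sg_notin: "v \<notin> range av \<Longrightarrow> Poly_Mapping.lookup (Sg av n) v = 0"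
  by (auto simp: Sg_def lookup_sum lookup_single when_def intro!: sum.neutral)


lemma keysum_delta:
  fixes \<alpha> :: "'i \<Rightarrow>\<^sub>0 nat" and c g :: "'i \<Rightarrow> nat"
  assumes a: "Poly_Mapping.keys \<alpha> \<subseteq> I" and c: "\<And>i. i \<in> I \<Longrightarrow> c i = g i + (if i = t then k else 0)"
  shows "(\<Sum>i\<in>Poly_Mapping.keys \<alpha>. Poly_Mapping.lookup \<alpha> i * c i) =
         (\<Sum>i\<in>Poly_Mapping.keys \<alpha>. Poly_Mapping.lookup \<alpha> i * g i) + Poly_Mapping.lookup \<alpha> t * k"
proof -
  have "(\<Sum>i\<in>Poly_Mapping.keys \<alpha>. Poly_Mapping.lookup \<alpha> i * c i) =
      (\<Sum>i\<in>Poly_Mapping.keys \<alpha>. Poly_Mapping.lookup \<alpha> i * g i + (if t = i then Poly_Mapping.lookup \<alpha> t * k else 0))"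
  proof (rule sum.cong[OF refl])
    fix i assume "i \<in> Poly_Mapping.keys \<alpha>"
    then have "c i = g i + (if i = t then k else 0)" using a c by blast
    then show "Poly_Mapping.lookup \<alpha> i * c i = Poly_Mapping.lookup \<alpha> i * g i + (if t = i then Poly_Mapping.lookup \<alpha> t * k else 0)"
      by (auto simp: algebra_simps)
  qed
  also have "\<dots> = (\<Sum>i\<in>Poly_Mapping.keys \<alpha>. Poly_Mapping.lookup \<alpha> i * g i) +
      (if t \<in> Poly_Mapping.keys \<alpha> then Poly_Mapping.lookup \<alpha> t * k else 0)"
    by (simp add: sum.distrib)
  also have "\<dots> = (\<Sum>i\<in>Poly_Mapping.keys \<alpha>. Poly_Mapping.lookup \<alpha> i * g i) + Poly_Mapping.lookup \<alpha> t * k"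
    by (auto simp: in_keys_iff)
  finally show ?thesis .
qed

lemma alg_indep_single:
  fixes h :: "'i \<Rightarrow> 'v::linorder mpoly"
  assumes hl: "\<And>i. i \<in> I \<Longrightarrow> h i \<noteq> 0 \<and> lm (h i) = Poly_Mapping.single (\<phi> i) 1"
    and inj: "inj_on \<phi> I"
  shows "alg_indep I h"
proof (rule alg_indep_lm)
  show "\<And>i. i \<in> I \<Longrightarrow> h i \<noteq> 0" using hl by blast
  fix \<alpha> \<beta> :: "'i \<Rightarrow>\<^sub>0 nat"
  assume a: "Poly_Mapping.keys \<alpha> \<subseteq> I" and b: "Poly_Mapping.keys \<beta> \<subseteq> I"
    and eq: "\<And>v. (\<Sum>i\<in>Poly_Mapping.keys \<alpha>. Poly_Mapping.lookup \<alpha> i * Poly_Mapping.lookup (lm (h i)) v) =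
           (\<Sum>i\<in>Poly_Mapping.keys \<beta>. Poly_Mapping.lookup \<beta> i * Poly_Mapping.lookup (lm (h i)) v)"
  show "\<alpha> = \<beta>"
  proof (rule poly_mapping_eqI)
    fix t
    show "Poly_Mapping.lookup \<alpha> t = Poly_Mapping.lookup \<beta> t"
    proof (cases "t \<in> I")
      case False
      then have "t \<notin> Poly_Mapping.keys \<alpha>" "t \<notin> Poly_Mapping.keys \<beta>" using a b by auto
      then show ?thesis by (simp add: in_keys_iff)
    next
      case True
      have c: "Poly_Mapping.lookup (lm (h i)) (\<phi> t) = 0 + (if i = t then 1 else 0)" if "i \<in> I" for i
        using hl[OF that] inj_onD[OF inj _ that True] by (auto simp: lookup_single when_def)
      show ?thesis
        using keysum_delta[OF a c] keysum_delta[OF b c] eq[of "\<phi> t"] by simp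
    qed
  qed
qed

lemma eF_indep:
  fixes av :: "nat \<Rightarrow> 'v::linorder" and yv :: "nat \<Rightarrow> 'v" and eF :: "svar \<Rightarrow> 'v mpoly"
  assumes sm: "strict_mono av" and K: "1 \<le> K" "K \<le> n"
  and I: "I \<subseteq> {E} \<union> {X r | r. 1 \<le> r}"
  and eE: "eF E = sigma_top av n"
  and eX: "\<And>r. 1 \<le> r \<Longrightarrow> r < K \<Longrightarrow> eF (X r) = eps av n r"
  and eY: "\<And>r. K \<le> r \<Longrightarrow> X r \<in> I \<Longrightarrow> eF (X r) = mvar (yv r)"
  and yr: "\<And>r. K \<le> r \<Longrightarrow> X r \<in> I \<Longrightarrow> yv r \<notin> range av"
  and yinj: "\<And>r r'. K \<le> r \<Longrightarrow> X r \<in> I \<Longrightarrow> K \<le> r' \<Longrightarrow> X r' \<in> I \<Longrightarrow> yv r = yv r' \<Longrightarrow> r = r'"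
  shows "alg_indep I eF"
proof -
  have inj: "inj av" using sm by (rule strict_mono_imp_inj_on)
  have cls: "i = E \<or> (\<exists>r. i = X r \<and> 1 \<le> r \<and> r < K) \<or> (\<exists>r. i = X r \<and> K \<le> r)" if "i \<in> I" for i
    using I that by auto
  have lmE: "eF E \<noteq> 0 \<and> lm (eF E) = Sg av n" using sigma_lead[of av n] eE by simp
  have lmX: "eF (X r) \<noteq> 0 \<and> lm (eF (X r)) = Mi av r" if "1 \<le> r" "r < K" for r
    using eps_lead[OF sm, of r n] eX[OF that] that K by simp
  have lmY: "eF (X r) \<noteq> 0 \<and> lm (eF (X r)) = Poly_Mapping.single (yv r) 1" if "K \<le> r" "X r \<in> I" for r
    using eY[OF that] by (simp add: mvar_def lm_single)
  show ?thesis
  proof (rule alg_indep_lm)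
    fix i assume "i \<in> I"
    then show "eF i \<noteq> 0" using cls lmE lmX lmY by blast
  next
    fix \<alpha> \<beta> :: "svar \<Rightarrow>\<^sub>0 nat"
    assume a: "Poly_Mapping.keys \<alpha> \<subseteq> I" and b: "Poly_Mapping.keys \<beta> \<subseteq> I"
      and eq: "\<And>v. (\<Sum>i\<in>Poly_Mapping.keys \<alpha>. Poly_Mapping.lookup \<alpha> i * Poly_Mapping.lookup (lm (eF i)) v) =
             (\<Sum>i\<in>Poly_Mapping.keys \<beta>. Poly_Mapping.lookup \<beta> i * Poly_Mapping.lookup (lm (eF i)) v)"
    show "\<alpha> = \<beta>"
    proof (rule poly_mapping_eqI)
      fix t
      show "Poly_Mapping.lookup \<alpha> t = Poly_Mapping.lookup \<beta> t"
      proof (cases "t \<in> I")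
        case False
        then have "t \<notin> Poly_Mapping.keys \<alpha>" "t \<notin> Poly_Mapping.keys \<beta>" using a b by auto
        then show ?thesis by (simp add: in_keys_iff)
      next
        case tI: True
        consider "t = E" | r where "t = X r" "1 \<le> r" "r < K" | r where "t = X r" "K \<le> r"
          using cls[OF tI] by blast
        then show ?thesis
        proof cases
          case 1
          have c: "Poly_Mapping.lookup (lm (eF i)) (av n) = 0 + (if i = t then 1 else 0)" if iI: "i \<in> I" for i
          proof -
            consider "i = E" | r where "i = X r" "1 \<le> r" "r < K" | r where "i = X r" "K \<le> r"
              using cls[OF iI] by blast
            then show ?thesis
            proof cases
              case 1 then show ?thesis using lmE \<open>t = E\<close> K by (simp add: lookup_Sg_av[OF inj])
            next
              case 2 then show ?thesis using lmX[OF 2(2,3)] \<open>t = E\<close> K by (simp add: lookup_Mi_av[OF inj])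
            next
              case 3
              have "yv r \<noteq> av n" using yr[OF 3(2)] 3(1) iI by auto
              then show ?thesis using lmY[OF 3(2)] 3(1) iI \<open>t = E\<close> by (simp add: lookup_single when_def)
            qed
          qed
          show ?thesis using keysum_delta[OF a c] keysum_delta[OF b c] eq[of "av n"] by simp
        next
          case 2
          have c: "Poly_Mapping.lookup (lm (eF i)) (av r) =
                   Poly_Mapping.lookup (lm (eF i)) (av (Suc r)) + (if i = t then 2 else 0)" if iI: "i \<in> I" for i
          proof -
            consider "i = E" | r' where "i = X r'" "1 \<le> r'" "r' < K" | r' where "i = X r'" "K \<le> r'"
              using cls[OF iI] by blast
            then show ?thesis
            proof cases
              case 1 then show ?thesis using lmE 2 K by (simp add: lookup_Sg_av[OF inj])
            next
              case 3
              have "yv r' \<noteq> av r" "yv r' \<noteq> av (Suc r)" using yr[OF 3(2)] 3(1) iI by auto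
              then show ?thesis using lmY[OF 3(2)] 3 2 iI by (auto simp: lookup_single when_def)
            next
              case c3: 2
              show ?thesis using lmX[OF c3(2,3)] c3 2 by (auto simp: lookup_Mi_av[OF inj])
            qed
          qed
          show ?thesis using keysum_delta[OF a c] keysum_delta[OF b c] eq[of "av r"] eq[of "av (Suc r)"] by simp
        next
          case 3
          have c: "Poly_Mapping.lookup (lm (eF i)) (yv r) = 0 + (if i = t then 1 else 0)" if iI: "i \<in> I" for i
          proof -
            have ynr: "yv r \<notin> range av" using yr[OF 3(2)] 3(1) tI by simp
            consider "i = E" | r' where "i = X r'" "1 \<le> r'" "r' < K" | r' where "i = X r'" "K \<le> r'"
              using cls[OF iI] by blast
            then show ?thesis
            proof cases
              case 1 then show ?thesis using lmE 3 ynr by (simp add: lookup_Sg_notin)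
            next
              case 2 then show ?thesis using lmX[OF 2(2,3)] 3 ynr by (simp add: lookup_Mi_notin)
            next
              case c3: 3
              have "yv r' = yv r \<longleftrightarrow> r' = r" using yinj[OF c3(2) _ 3(2)] c3(1) iI 3(1) tI by auto
              then show ?thesis using lmY[OF c3(2)] c3 3 iI by (auto simp: lookup_single when_def)
            qed
          qed
          show ?thesis using keysum_delta[OF a c] keysum_delta[OF b c] eq[of "yv r"] by simp
        qed
      qed
    qed
  qed
qed

context ctx
begin

definition Rr :: "nat \<Rightarrow> svar mpoly" where
  "Rr r = (SOME R. mvars R \<subseteq> {X r' | r'. 1 \<le> r' \<and> r' \<le> r - 1} \<and>
                   ell av n r - mconst (cl r) * eps av n r = meval eF R)"

lemma Rr: "1 \<le> r \<Longrightarrow> r < K \<Longrightarrow> mvars (Rr r) \<subseteq> {X r' | r'. 1 \<le> r' \<and> r' \<le> r - 1} \<and>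
                   ell av n r - mconst (cl r) * eps av n r = meval eF (Rr r)"
  unfolding Rr_def by (rule someI_ex) (use ell_rel in \<open>auto simp: Smem_def\<close>)

definition Tm :: "svar \<Rightarrow> svar mpoly" where
  "Tm v = (case v of E \<Rightarrow> mvar E
     | X r \<Rightarrow> if 1 \<le> r \<and> r < K then mconst (cl r) * mvar (X r) + Rr r else mvar (X r))"

lemma Tm_eval: assumes "1 \<le> r" "r < K" shows "meval eF (Tm (X r)) = ell av n r"
proof -
  have "meval eF (Rr r) = ell av n r - mconst (cl r) * eps av n r" using Rr[OF assms] by simp
  then show ?thesis using eFX[OF assms] assms by (simp add: Tm_def meval_add meval_mult)
qed

lemma mconst_mvar: "mconst c * mvar v = Poly_Mapping.single (Poly_Mapping.single v 1) c"
  by (simp add: mconst_def mvar_def mult_single)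

lemma Tm_lead: "Tm v \<noteq> 0 \<and> lm (Tm v) = Poly_Mapping.single v 1"
proof (cases v)
  case E then show ?thesis by (simp add: Tm_def mvar_def lm_single)
next
  case (X r)
  show ?thesis
  proof (cases "1 \<le> r \<and> r < K")
    case False then show ?thesis using X by (auto simp: Tm_def mvar_def lm_single)
  next
    case True
    have cnz: "cl r \<noteq> 0" using cl_nz True by simp
    let ?A = "Poly_Mapping.single (Poly_Mapping.single (X r) 1) (cl r) :: svar mpoly"
    have Anz: "?A \<noteq> 0" using cnz by simp
    have lmA: "lm ?A = Poly_Mapping.single (X r) 1" using cnz by (simp add: lm_single)
    have "?A + Rr r \<noteq> 0 \<and> lm (?A + Rr r) = lm ?A \<and> lc (?A + Rr r) = lc ?A"
    proof (rule lm_add_less[OF Anz])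
      fix m assume m: "m \<in> Poly_Mapping.keys (Rr r)"
      have km: "Poly_Mapping.keys m \<subseteq> {X r' | r'. 1 \<le> r' \<and> r' \<le> r - 1}"
        using Rr[of r] True m by (auto simp: mvars_def)
      show "m < lm ?A" unfolding lmA less_pm_iff
      proof (rule less_funI, rule exI[where x="X r"], rule conjI)
        have "X r \<notin> Poly_Mapping.keys m" using km True by auto
        then show "Poly_Mapping.lookup m (X r) < Poly_Mapping.lookup (Poly_Mapping.single (X r) 1) (X r)"
          by (simp add: in_keys_iff)
        show "\<forall>k'<X r. Poly_Mapping.lookup m k' = Poly_Mapping.lookup (Poly_Mapping.single (X r) 1) k'"
        proof (intro allI impI)
          fix k' assume k': "k' < X r"
          have "k' \<notin> Poly_Mapping.keys m"
          proof
            assume "k' \<in> Poly_Mapping.keys m"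
            then obtain r' where "k' = X r'" "r' \<le> r - 1" "1 \<le> r'" using km by auto
            then have "X r < k'" using True by (simp add: X_less_iff)
            then show False using k' by simp
          qed
          then show "Poly_Mapping.lookup m k' = Poly_Mapping.lookup (Poly_Mapping.single (X r) 1) k'"
            using k' by (auto simp: in_keys_iff lookup_single when_def)
        qed
      qed
    qed
    then show ?thesis using X True lmA by (simp add: Tm_def mconst_mvar)
  qed
qed

lemma Tm_vars_E: "mvars (Tm E) = {E}"
  by (simp add: Tm_def)

lemma Tm_vars_X: "mvars (Tm (X r)) \<subseteq> {X r' | r'. 1 \<le> r' \<and> r' \<le> r} \<union> {X r}"
proof (cases "1 \<le> r \<and> r < K")
  case True
  have "mvars (Tm (X r)) \<subseteq> mvars (mconst (cl r) * mvar (X r)) \<union> mvars (Rr r)"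
    using True by (simp add: Tm_def mvars_add)
  also have "\<dots> \<subseteq> {X r} \<union> {X r' | r'. 1 \<le> r' \<and> r' \<le> r - 1}"
    using mvars_mult[of "mconst (cl r)" "mvar (X r)"] Rr[of r] True by auto
  finally show ?thesis by auto
next
  case False then show ?thesis by (auto simp: Tm_def)
qed

end

lemma k_bounds:
  fixes n k :: nat
  assumes "n \<ge> 2" and "k = nat \<lceil>real n / 2\<rceil>"
  shows "1 \<le> k \<and> k \<le> n"
proof -
  define c where "c = \<lceil>real n / 2\<rceil>"
  have "1 \<le> real n / 2" using assms(1) by simp
  then have c1: "1 \<le> c" unfolding c_def by (simp add: le_ceiling_iff)
  have c2: "c \<le> int n" unfolding c_def by (simp add: ceiling_le_iff)
  have "k = nat c" using assms(2) c_def by simp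
  then show ?thesis using c1 c2 by auto
qed

theorem mainTheorem11:
  fixes n k :: nat
  assumes "n \<ge> 2"
    and "k = nat \<lceil>real n / 2\<rceil>"
  shows "alg_indep {0..<k} (\<lambda>i. if i = 0 then sigma_top id n else ell id n i)
    \<and> inj_on (meval (\<lambda>v. case v of
                          E \<Rightarrow> sigma_top A n
                        | X i \<Rightarrow> (if i < k then ell A n i else mvar (Y i))))
        {P. mvars P \<subseteq> {E} \<union> {X i | i. i \<ge> 1}}"
proof
  have kb: "1 \<le> k" "k \<le> n" using k_bounds[OF assms] by auto
  define eF1 :: "svar \<Rightarrow> nat mpoly" where
    "eF1 v = (case v of E \<Rightarrow> sigma_top id n | X r \<Rightarrow> eps id n r)" for v
  interpret c1: ctx id n k eF1 by standard (simp add: eF1_def)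
  define \<phi>1 where "\<phi>1 i = (if i = 0 then E else X i)" for i :: nat
  define T1 where "T1 i = c1.Tm (\<phi>1 i)" for i
  define I1 where "I1 = {E} \<union> {X r | r. 1 \<le> r \<and> r < k}"
  have T1ind: "alg_indep {0..<k} T1"
  proof (rule alg_indep_single[where \<phi>=\<phi>1])
    show "\<And>i. i \<in> {0..<k} \<Longrightarrow> T1 i \<noteq> 0 \<and> lm (T1 i) = Poly_Mapping.single (\<phi>1 i) 1"
      unfolding T1_def by (rule c1.Tm_lead)
    show "inj_on \<phi>1 {0..<k}" by (auto simp: inj_on_def \<phi>1_def split: if_splits)
  qed
  have eF1ind: "alg_indep I1 eF1"
    by (rule eF_indep[where av=id and K=k and n=n and yv=id])
       (use kb in \<open>auto simp: I1_def eF1_def strict_mono_def\<close>)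
  have T1vars: "mvars (T1 i) \<subseteq> I1" if "i \<in> {0..<k}" for i
  proof (cases "i = 0")
    case True then show ?thesis by (simp add: T1_def \<phi>1_def c1.Tm_vars_E I1_def)
  next
    case False
    then show ?thesis using c1.Tm_vars_X[of i] that by (auto simp: T1_def \<phi>1_def I1_def)
  qed
  show "alg_indep {0..<k} (\<lambda>i. if i = 0 then sigma_top id n else ell id n i)"
    unfolding alg_indep_def
  proof (intro allI impI)
    fix P :: "nat mpoly"
    assume vars: "mvars P \<subseteq> {0..<k}" and ev: "meval (\<lambda>i. if i = 0 then sigma_top id n else ell id n i) P = 0"
    have "meval (\<lambda>i. if i = 0 then sigma_top id n else ell id n i) P = meval (\<lambda>i. meval eF1 (T1 i)) P"
    proof (rule meval_cong[OF vars])
      fix i assume i: "i \<in> {0..<k}"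
      show "(if i = 0 then sigma_top id n else ell id n i) = meval eF1 (T1 i)"
      proof (cases "i = 0")
        case True then show ?thesis by (simp add: T1_def \<phi>1_def c1.Tm_def eF1_def)
      next
        case False then show ?thesis using c1.Tm_eval[of i] i by (simp add: T1_def \<phi>1_def)
      qed
    qed
    then have "meval eF1 (meval T1 P) = 0" using ev by (simp add: meval_compose)
    moreover have "mvars (meval T1 P) \<subseteq> I1"
      using mvars_meval[of T1 P] vars T1vars by blast
    ultimately have "meval T1 P = 0" using eF1ind unfolding alg_indep_def by blast
    then show "P = 0" using T1ind vars unfolding alg_indep_def by blast
  qed
  define H :: "svar \<Rightarrow> tvar mpoly" where
    "H = (\<lambda>v. case v of E \<Rightarrow> sigma_top A n | X i \<Rightarrow> (if i < k then ell A n i else mvar (Y i)))"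
  define eF2 :: "svar \<Rightarrow> tvar mpoly" where
    "eF2 v = (case v of E \<Rightarrow> sigma_top A n | X r \<Rightarrow> if r < k then eps A n r else mvar (Y r))" for v
  interpret c2: ctx A n k eF2 by standard (simp add: eF2_def)
  define I2 where "I2 = {E} \<union> {X i | i. i \<ge> 1}"
  have T2ind: "alg_indep I2 c2.Tm"
    by (rule alg_indep_single[where \<phi>=id]) (simp_all add: c2.Tm_lead)
  have eF2ind: "alg_indep I2 eF2"
    by (rule eF_indep[where av=A and K=k and n=n and yv=Y])
       (use kb in \<open>auto simp: I2_def eF2_def strict_mono_A\<close>)
  have T2vars: "mvars (c2.Tm v) \<subseteq> I2" if "v \<in> I2" for v
    using that c2.Tm_vars_E c2.Tm_vars_X by (fastforce simp: I2_def)
  have Hind: "alg_indep I2 H"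
    unfolding alg_indep_def
  proof (intro allI impI)
    fix P :: "svar mpoly"
    assume vars: "mvars P \<subseteq> I2" and ev: "meval H P = 0"
    have "meval H P = meval (\<lambda>v. meval eF2 (c2.Tm v)) P"
    proof (rule meval_cong[OF vars])
      fix v assume v: "v \<in> I2"
      show "H v = meval eF2 (c2.Tm v)"
      proof (cases v)
        case E then show ?thesis by (simp add: H_def c2.Tm_def eF2_def)
      next
        case (X r)
        then have r1: "1 \<le> r" using v by (auto simp: I2_def)
        show ?thesis
        proof (cases "r < k")
          case True then show ?thesis using c2.Tm_eval[of r] r1 X by (simp add: H_def)
        next
          case False then show ?thesis using X by (simp add: H_def c2.Tm_def eF2_def)
        qed
      qed
    qed
    then have "meval eF2 (meval c2.Tm P) = 0" using ev by (simp add: meval_compose)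
    moreover have "mvars (meval c2.Tm P) \<subseteq> I2"
      using mvars_meval[of c2.Tm P] vars T2vars by blast
    ultimately have "meval c2.Tm P = 0" using eF2ind unfolding alg_indep_def by blast
    then show "P = 0" using T2ind vars unfolding alg_indep_def by blast
  qed
  show "inj_on (meval (\<lambda>v. case v of
                          E \<Rightarrow> sigma_top A n
                        | X i \<Rightarrow> (if i < k then ell A n i else mvar (Y i))))
        {P. mvars P \<subseteq> {E} \<union> {X i | i. i \<ge> 1}}"
    unfolding H_def[symmetric] I2_def[symmetric]
  proof (rule inj_onI)
    fix P Q assume P: "P \<in> {P. mvars P \<subseteq> I2}" and Q: "Q \<in> {P. mvars P \<subseteq> I2}"
      and eq: "meval H P = meval H Q"
    have "mvars (P - Q) \<subseteq> I2" using P Q mvars_diff[of P Q] by auto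
    moreover have "meval H (P - Q) = 0" using eq by (simp add: meval_diff)
    ultimately have "P - Q = 0" using Hind unfolding alg_indep_def by blast
    then show "P = Q" by simp
  qed
qed


end
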